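(* Assume $\rho(x,y)=0$ if and only if $x=y$. For any $D\geq0$ there exists a sequence of sets $C_n^*\subset A^n$ such that (i') $\limsup_{n\to\infty}\frac1n\log M^n(C^*_n)\leq R(D)$; (ii') $P^n([C_n^*]_D)\to1$ as $n\to\infty$; and (iii') $\limsup_{n\to\infty}E_{P^n}[\rho_n(X_1^n,C^*_n)]\leq D$.
   Context: Setting: $A$ is a finite set; $P$ is a probability mass function on $A$ with $P(a)>0$ for all $a$; $\rho:A\times A\to[0,\infty)$; $M:A\to(0,\infty)$. $\rho_n(x_1^n,y_1^n)=\frac1n\sum_{i=1}^n\rho(x_i,y_i)$; $M^n(C)=\sum_{y_1^n\in C}\prod_{i=1}^nM(y_i)$; $P^n$ is the product distribution and $X_1^n\sim P^n$; $\rho_n(x_1^n,C)=\min_{y_1^n\in C}\rho_n(x_1^n,y_1^n)$. The $D$-blowup of $C\subset A^n$ is $[C]_D=\{x_1^n\in A^n:\rho_n(x_1^n,y_1^n)\le D\text{ for some }y_1^n\in C\}$. $H(\mu\|\nu)$ is relative entropy; ${\cal M}(P,Q,D)$ is the set of probability measures $W$ on $A\times A$ with marginals $P$ and $Q$ and $E_W[\rho(X,Y)]\le D$; $I(P,Q,D)=\inf_{W\in{\cal M}(P,Q,D)}H(W\|P\times Q)$ ($+\infty$ if empty); $R(D)=\inf_Q\{I(P,Q,D)+E_Q[\log M(Y)]\}$ over probability distributions $Q$ on $A$. Logarithms are natural. *)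

theory Defs
  imports "HOL-Analysis.Analysis"
begin

text \<open>The finite alphabet A is modelled as a type of class finite (A = UNIV).
 Strings x_1^n in A^n are lists of length n.\<close>

definition strings :: "nat \<Rightarrow> 'a list set" where
  "strings n = {xs. length xs = n}"

definition rho_n :: "('a \<Rightarrow> 'a \<Rightarrow> real) \<Rightarrow> nat \<Rightarrow> 'a list \<Rightarrow> 'a list \<Rightarrow> real" where
  "rho_n \<rho> n xs ys = (1 / real n) * (\<Sum>i<n. \<rho> (xs ! i) (ys ! i))"

text \<open>distance from a string to a set (infinite for the empty set)\<close>
definition rho_n_set :: "('a \<Rightarrow> 'a \<Rightarrow> real) \<Rightarrow> nat \<Rightarrow> 'a list \<Rightarrow> 'a list set \<Rightarrow> ereal" where
  "rho_n_set \<rho> n xs C = (INF ys\<in>C. ereal (rho_n \<rho> n xs ys))"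

definition prod_meas :: "('a \<Rightarrow> real) \<Rightarrow> nat \<Rightarrow> 'a list set \<Rightarrow> real" where
  "prod_meas M n C = (\<Sum>ys\<in>C. \<Prod>i<n. M (ys ! i))"

definition blowup :: "('a \<Rightarrow> 'a \<Rightarrow> real) \<Rightarrow> nat \<Rightarrow> real \<Rightarrow> 'a list set \<Rightarrow> 'a list set" where
  "blowup \<rho> n D C = {xs \<in> strings n. \<exists>ys\<in>C. rho_n \<rho> n xs ys \<le> D}"

definition exp_dist :: "('a \<Rightarrow> real) \<Rightarrow> ('a \<Rightarrow> 'a \<Rightarrow> real) \<Rightarrow> nat \<Rightarrow> 'a list set \<Rightarrow> ereal" where
  "exp_dist P \<rho> n C = (\<Sum>xs\<in>strings n. ereal (\<Prod>i<n. P (xs ! i)) * rho_n_set \<rho> n xs C)"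

definition norm_log_meas :: "('a \<Rightarrow> real) \<Rightarrow> nat \<Rightarrow> 'a list set \<Rightarrow> ereal" where
  "norm_log_meas M n C =
     (if prod_meas M n C = 0 then -\<infinity> else ereal (ln (prod_meas M n C) / real n))"

definition is_pmf :: "('b::finite \<Rightarrow> real) \<Rightarrow> bool" where
  "is_pmf Q \<longleftrightarrow> (\<forall>x. 0 \<le> Q x) \<and> (\<Sum>x\<in>UNIV. Q x) = 1"

definition rel_entropy :: "('b::finite \<Rightarrow> real) \<Rightarrow> ('b \<Rightarrow> real) \<Rightarrow> ereal" where
  "rel_entropy W V =
     (if \<exists>x. W x > 0 \<and> V x = 0 then \<infinity>
      else ereal (\<Sum>x\<in>{x. W x > 0}. W x * ln (W x / V x)))"

definition couplings :: "('a::finite \<Rightarrow> real) \<Rightarrow> ('a \<Rightarrow> real) \<Rightarrow> ('a \<Rightarrow> 'a \<Rightarrow> real) \<Rightarrow> real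
    \<Rightarrow> ('a \<times> 'a \<Rightarrow> real) set" where
  "couplings P Q \<rho> D = {W. is_pmf W \<and> (\<forall>a. (\<Sum>b\<in>UNIV. W (a, b)) = P a)
      \<and> (\<forall>b. (\<Sum>a\<in>UNIV. W (a, b)) = Q b)
      \<and> (\<Sum>ab\<in>UNIV. W ab * \<rho> (fst ab) (snd ab)) \<le> D}"

text \<open>I(P,Q,D); the infimum over the empty set is +infinity\<close>
definition I_PQD :: "('a::finite \<Rightarrow> real) \<Rightarrow> ('a \<Rightarrow> real) \<Rightarrow> ('a \<Rightarrow> 'a \<Rightarrow> real) \<Rightarrow> real \<Rightarrow> ereal" where
  "I_PQD P Q \<rho> D = (INF W\<in>couplings P Q \<rho> D. rel_entropy W (\<lambda>ab. P (fst ab) * Q (snd ab)))"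

definition R_fun :: "('a::finite \<Rightarrow> real) \<Rightarrow> ('a \<Rightarrow> 'a \<Rightarrow> real) \<Rightarrow> ('a \<Rightarrow> real) \<Rightarrow> real \<Rightarrow> ereal" where
  "R_fun P \<rho> M D = (INF Q\<in>{Q. is_pmf Q}. I_PQD P Q \<rho> D + ereal (\<Sum>b\<in>UNIV. Q b * ln (M b)))"

end

theory Submission
  imports Defs
begin

definition lists_in :: "'b set \<Rightarrow> nat \<Rightarrow> 'b list set" where
  "lists_in S n = {xs. set xs \<subseteq> S \<and> length xs = n}"

lemma finite_lists_in: "finite S \<Longrightarrow> finite (lists_in S n)"
  unfolding lists_in_def by (rule finite_lists_length_eq)

lemma lists_in_Suc: "lists_in S (Suc n) = (\<lambda>(b,ys). b # ys) ` (S \<times> lists_in S n)"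
  unfolding lists_in_def
  by (auto simp: length_Suc_conv image_iff) 

lemma sum_prod_lists:
  fixes f :: "nat \<Rightarrow> 'b \<Rightarrow> 'c::comm_semiring_1"
  assumes "finite S"
  shows "(\<Sum>ys\<in>lists_in S n. \<Prod>i<n. f i (ys!i)) = (\<Prod>i<n. \<Sum>b\<in>S. f i b)"
  using assms
proof (induction n arbitrary: f)
  case 0
  have "lists_in S 0 = {[]}" unfolding lists_in_def by auto
  then show ?case by simp
next
  case (Suc n)
  have inj: "inj_on (\<lambda>(b,ys). b # ys) (S \<times> lists_in S n)"
    by (auto simp: inj_on_def)
  have "(\<Sum>ys\<in>lists_in S (Suc n). \<Prod>i<Suc n. f i (ys!i))
      = (\<Sum>(b,ys)\<in>S \<times> lists_in S n. \<Prod>i<Suc n. f i ((b#ys)!i))"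
    unfolding lists_in_Suc by (rule sum.reindex_cong[OF inj refl]) (simp add: case_prod_unfold)
  also have "\<dots> = (\<Sum>(b,ys)\<in>S \<times> lists_in S n. f 0 b * (\<Prod>i<n. f (Suc i) (ys!i)))"
    by (simp only: prod.lessThan_Suc_shift nth_Cons_0 nth_Cons_Suc)
  also have "\<dots> = (\<Sum>b\<in>S. f 0 b * (\<Sum>ys\<in>lists_in S n. \<Prod>i<n. f (Suc i) (ys!i)))"
    by (simp add: sum.cartesian_product[symmetric] sum_distrib_left)
  also have "\<dots> = (\<Sum>b\<in>S. f 0 b) * (\<Prod>i<n. \<Sum>b\<in>S. f (Suc i) b)"
    using Suc.IH[of "\<lambda>i. f (Suc i)"] Suc.prems by (simp add: sum_distrib_right)
  also have "\<dots> = (\<Prod>i<Suc n. \<Sum>b\<in>S. f i b)"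
    by (simp only: prod.lessThan_Suc_shift)
  finally show ?case .
qed

lemma strings_lists_in: "strings n = lists_in UNIV n"
  unfolding strings_def lists_in_def by auto

lemma finite_strings: "finite (strings n :: 'a::finite list set)"
  unfolding strings_lists_in by (rule finite_lists_in) simp

lemma sum_prod_strings:
  fixes f :: "nat \<Rightarrow> 'b::finite \<Rightarrow> 'c::comm_semiring_1"
  shows "(\<Sum>ys\<in>strings n. \<Prod>i<n. f i (ys!i)) = (\<Prod>i<n. \<Sum>b\<in>UNIV. f i b)"
  unfolding strings_lists_in by (rule sum_prod_lists) simp

lemma sum_pn_1:
  fixes p :: "'b::finite \<Rightarrow> real"
  assumes "(\<Sum>b\<in>UNIV. p b) = 1"
  shows "(\<Sum>ys\<in>strings n. \<Prod>i<n. p (ys!i)) = 1"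
  using sum_prod_strings[of "\<lambda>i. p" n] assms by simp


lemma second_moment:
  fixes p :: "'b::finite \<Rightarrow> real" and g :: "'b \<Rightarrow> real"
  assumes p1: "(\<Sum>b\<in>UNIV. p b) = 1" and g0: "(\<Sum>b\<in>UNIV. p b * g b) = 0"
  shows "(\<Sum>xs\<in>strings n. (\<Prod>k<n. p (xs!k)) * (\<Sum>i<n. g (xs!i))^2)
         = real n * (\<Sum>b\<in>UNIV. p b * (g b)^2)"
proof -
  define V where "V = (\<Sum>b\<in>UNIV. p b * (g b)^2)"
  define F where "F i j k b = p b * (if k = i then g b else 1) * (if k = j then g b else 1)" for i j k :: nat and b
  have inner: "(\<Sum>xs\<in>strings n. (\<Prod>k<n. p (xs!k)) * (g (xs!i) * g (xs!j)))
       = (if i = j then V else 0)" if ij: "i < n" "j < n" for i j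
  proof -
    have "(\<Prod>k<n. p (xs!k)) * (g (xs!i) * g (xs!j)) = (\<Prod>k<n. F i j k (xs!k))" for xs
      using ij by (simp add: F_def prod.distrib prod.delta)
    hence "(\<Sum>xs\<in>strings n. (\<Prod>k<n. p (xs!k)) * (g (xs!i) * g (xs!j)))
        = (\<Prod>k<n. \<Sum>b\<in>UNIV. F i j k b)"
      by (simp add: sum_prod_strings)
    also have "(\<Sum>b\<in>UNIV. F i j k b) = (if k = i \<and> k = j then V else if k = i \<or> k = j then 0 else 1)" for k
      using p1 g0 by (auto simp: F_def V_def power2_eq_square mult.assoc mult.left_commute)
    hence "(\<Prod>k<n. \<Sum>b\<in>UNIV. F i j k b) = (\<Prod>k<n. (if k = i \<and> k = j then V else if k = i \<or> k = j then 0 else 1))"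
      by simp
    also have "\<dots> = (if i = j then V else 0)"
    proof (cases "i = j")
      case True
      then have "(\<Prod>k<n. (if k = i \<and> k = j then V else if k = i \<or> k = j then 0 else 1)) = (\<Prod>k<n. (if k = i then V else 1))"
        by (intro prod.cong) auto
      then show ?thesis using ij True by (simp add: prod.delta)
    next
      case False
      have "(\<Prod>k<n. (if k = i \<and> k = j then V else if k = i \<or> k = j then 0 else 1)) = 0"
        using ij False by (intro prod_zero) auto
      then show ?thesis using False by simp
    qed
    finally show ?thesis .
  qed
  have "(\<Sum>xs\<in>strings n. (\<Prod>k<n. p (xs!k)) * (\<Sum>i<n. g (xs!i))^2)
      = (\<Sum>xs\<in>strings n. \<Sum>i<n. \<Sum>j<n. (\<Prod>k<n. p (xs!k)) * (g (xs!i) * g (xs!j)))"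
  proof (intro sum.cong refl)
    fix xs :: "'b list"
    have "(\<Sum>i<n. g (xs!i))^2 = (\<Sum>i<n. \<Sum>j<n. g (xs!i) * g (xs!j))"
      unfolding power2_eq_square by (rule sum_product)
    then show "(\<Prod>k<n. p (xs!k)) * (\<Sum>i<n. g (xs!i))^2 = (\<Sum>i<n. \<Sum>j<n. (\<Prod>k<n. p (xs!k)) * (g (xs!i) * g (xs!j)))"
      by (simp add: sum_distrib_left)
  qed
  also have "\<dots> = (\<Sum>i<n. \<Sum>j<n. \<Sum>xs\<in>strings n. (\<Prod>k<n. p (xs!k)) * (g (xs!i) * g (xs!j)))"
    apply (rule trans[OF sum.swap])
    apply (intro sum.cong refl)
    apply (rule sum.swap)
    done
  also have "\<dots> = (\<Sum>i<n. \<Sum>j<n. (if i = j then V else 0))"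
    by (intro sum.cong refl) (simp add: inner)
  also have "\<dots> = real n * V" by simp
  finally show ?thesis unfolding V_def .
qed


lemma pn_nonneg: "(\<forall>b. p b \<ge> (0::real)) \<Longrightarrow> (\<Prod>i<n. p (xs!i)) \<ge> 0"
  by (simp add: prod_nonneg)

lemma lln:
  fixes p :: "'b::finite \<Rightarrow> real" and h :: "'b \<Rightarrow> real"
  assumes p0: "\<forall>b. p b \<ge> 0" and p1: "(\<Sum>b\<in>UNIV. p b) = 1" and d: "\<delta> > 0"
  shows "(\<lambda>n. \<Sum>xs\<in>strings n. if \<delta> \<le> \<bar>(\<Sum>i<n. h (xs!i)) / real n - (\<Sum>b\<in>UNIV. p b * h b)\<bar>
            then \<Prod>i<n. p (xs!i) else 0) \<longlonglongrightarrow> 0"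
proof -
  define \<mu> where "\<mu> = (\<Sum>b\<in>UNIV. p b * h b)"
  define g where "g b = h b - \<mu>" for b
  define V where "V = (\<Sum>b\<in>UNIV. p b * (g b)^2)"
  have g0: "(\<Sum>b\<in>UNIV. p b * g b) = 0"
    using p1 by (simp add: g_def right_diff_distrib sum_subtractf \<mu>_def flip: sum_distrib_right)
  define f where "f n = (\<Sum>xs\<in>strings n. if \<delta> \<le> \<bar>(\<Sum>i<n. h (xs!i)) / real n - \<mu>\<bar>
            then \<Prod>i<n. p (xs!i) else 0)" for n
  have bound: "f n \<le> V / \<delta>\<^sup>2 * inverse (real n)" if n: "n \<ge> 1" for n
  proof -
    have pt: "(if \<delta> \<le> \<bar>(\<Sum>i<n. h (xs!i)) / real n - \<mu>\<bar> then \<Prod>i<n. p (xs!i) else 0)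
        \<le> (\<Prod>i<n. p (xs!i)) * (\<Sum>i<n. g (xs!i))^2 / (real n * \<delta>)^2" for xs
    proof (cases "\<delta> \<le> \<bar>(\<Sum>i<n. h (xs!i)) / real n - \<mu>\<bar>")
      case True
      have "(\<Sum>i<n. g (xs!i)) = (\<Sum>i<n. h (xs!i)) - real n * \<mu>"
        by (simp add: g_def sum_subtractf)
      also have "\<dots> = real n * ((\<Sum>i<n. h (xs!i)) / real n - \<mu>)"
        using n by (simp add: field_simps)
      finally have "\<bar>\<Sum>i<n. g (xs!i)\<bar> \<ge> real n * \<delta>"
        using True n by (simp add: abs_mult)
      hence "(real n * \<delta>)^2 \<le> (\<Sum>i<n. g (xs!i))^2"
        using d by (metis abs_ge_zero abs_of_nonneg le_trans mult_nonneg_nonneg of_nat_0_le_iff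
            power2_abs less_imp_le power_mono)
      hence "1 \<le> (\<Sum>i<n. g (xs!i))^2 / (real n * \<delta>)^2"
        using n d by (simp add: field_simps)
      hence "(\<Prod>i<n. p (xs!i)) * 1 \<le> (\<Prod>i<n. p (xs!i)) * ((\<Sum>i<n. g (xs!i))^2 / (real n * \<delta>)^2)"
        by (intro mult_left_mono pn_nonneg p0) (use p0 in auto)
      then show ?thesis using True by simp
    next
      case False
      then show ?thesis using p0 by (simp add: pn_nonneg)
    qed
    have "f n \<le> (\<Sum>xs\<in>strings n. (\<Prod>i<n. p (xs!i)) * (\<Sum>i<n. g (xs!i))^2 / (real n * \<delta>)^2)"
      unfolding f_def by (rule sum_mono) (rule pt)
    also have "\<dots> = real n * V / (real n * \<delta>)^2"
      using second_moment[OF p1 g0, of n] by (simp add: V_def flip: sum_divide_distrib)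
    also have "\<dots> = V / \<delta>\<^sup>2 * inverse (real n)"
      using n d by (simp add: field_simps power2_eq_square)
    finally show ?thesis .
  qed
  have nn: "f n \<ge> 0" for n
    unfolding f_def using p0 by (intro sum_nonneg) (simp add: pn_nonneg)
  have "(\<lambda>n. V / \<delta>\<^sup>2 * inverse (real n)) \<longlonglongrightarrow> 0"
    by (intro tendsto_mult_right_zero) (rule lim_inverse_n)
  then have "f \<longlonglongrightarrow> 0"
    by (intro tendsto_sandwich[of "\<lambda>n. 0" f sequentially "\<lambda>n. V / \<delta>\<^sup>2 * inverse (real n)" 0])
       (use nn bound in \<open>auto simp: eventually_sequentially\<close>)
  then show ?thesis unfolding f_def \<mu>_def .
qed

lemma sum_UNIV_pair: "(\<Sum>z\<in>(UNIV::('a::finite \<times> 'b::finite) set). f z) = (\<Sum>a\<in>UNIV. \<Sum>b\<in>UNIV. f (a,b))"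
  by (simp add: sum.cartesian_product UNIV_Times_UNIV[symmetric] del: UNIV_Times_UNIV)

lemma sum_pairs_strings:
  fixes F :: "'a::finite list \<Rightarrow> 'b::finite list \<Rightarrow> 'c::comm_monoid_add"
  shows "(\<Sum>x\<in>strings n. \<Sum>y\<in>strings n. F x y) = (\<Sum>zs\<in>strings n. F (map fst zs) (map snd zs))"
proof -
  have bij: "bij_betw (\<lambda>zs. (map fst zs, map snd zs)) (strings n) (strings n \<times> strings n)"
    apply (rule bij_betwI[where g = "\<lambda>(x,y). zip x y"])
       apply (auto simp: strings_def zip_map_fst_snd)
    done
  have "(\<Sum>zs\<in>strings n. F (map fst zs) (map snd zs)) = (\<Sum>(x,y)\<in>strings n \<times> strings n. F x y)"
    using sum.reindex_bij_betw[OF bij, of "\<lambda>(x,y). F x y"] by simp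
  also have "\<dots> = (\<Sum>x\<in>strings n. \<Sum>y\<in>strings n. F x y)"
    by (simp add: sum.cartesian_product)
  finally show ?thesis by simp
qed

lemma pow_convex_ineq:
  fixes b u :: real
  assumes "0 \<le> b" "b \<le> 1" "0 \<le> u" "u \<le> 1"
  shows "(1 - b + b * u) ^ N \<le> 1 - b + b * u ^ N"
proof (induction N)
  case 0
  then show ?case by simp
next
  case (Suc N)
  have A: "0 \<le> 1 - b + b * u" using assms by (simp add: mult_le_one add_increasing2)
  have uN: "0 \<le> u ^ N" "u ^ N \<le> 1" using assms by (auto simp: power_le_one)
  have "(1 - b + b * u) ^ Suc N = (1 - b + b * u) * (1 - b + b * u) ^ N" by simp
  also have "\<dots> \<le> (1 - b + b * u) * (1 - b + b * u ^ N)"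
    by (rule mult_left_mono[OF Suc.IH A])
  also have "\<dots> \<le> 1 - b + b * u ^ Suc N"
  proof -
    have "1 - b + b * u ^ Suc N - (1 - b + b * u) * (1 - b + b * u ^ N)
        = b * (1 - b) * (1 - u) * (1 - u ^ N)"
      by (simp add: algebra_simps power2_eq_square)
    also have "\<dots> \<ge> 0" using assms uN by (intro mult_nonneg_nonneg) auto
    finally show ?thesis by simp
  qed
  finally show ?case .
qed

lemma averaging:
  fixes w f :: "'c \<Rightarrow> real"
  assumes "finite S" "\<forall>s\<in>S. w s \<ge> 0" "(\<Sum>s\<in>S. w s) = 1" "(\<Sum>s\<in>S. w s * f s) \<le> B"
  shows "\<exists>s\<in>S. f s \<le> B"
proof (rule ccontr)
  assume "\<not> ?thesis"
  hence gt: "\<forall>s\<in>S. f s > B" by auto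
  have "(\<Sum>s\<in>S. w s * (f s - B)) = (\<Sum>s\<in>S. w s * f s) - B"
    using assms(3) by (simp add: right_diff_distrib sum_subtractf flip: sum_distrib_right)
  hence le0: "(\<Sum>s\<in>S. w s * (f s - B)) \<le> 0" using assms(4) by simp
  have nn: "\<forall>s\<in>S. w s * (f s - B) \<ge> 0" using gt assms(2) by auto
  hence "\<forall>s\<in>S. w s * (f s - B) = 0"
    using le0 sum_nonneg_eq_0_iff[OF assms(1)] by (metis (no_types, lifting) antisym sum_nonneg)
  hence "\<forall>s\<in>S. w s = 0" using gt by auto
  hence "(\<Sum>s\<in>S. w s) = 0" by simp
  thus False using assms(3) by simp
qed


locale cover_setup =
  fixes P Q :: "'a::finite \<Rightarrow> real" and W :: "'a \<times> 'a \<Rightarrow> real"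
    and \<rho> :: "'a \<Rightarrow> 'a \<Rightarrow> real" and M :: "'a \<Rightarrow> real" and D \<delta> :: real
  assumes P0: "\<forall>a. P a > 0" and P1: "(\<Sum>a\<in>UNIV. P a) = 1"
    and W0: "\<forall>z. W z \<ge> 0"
    and WP: "\<forall>a. (\<Sum>b\<in>UNIV. W (a,b)) = P a"
    and WQ: "\<forall>b. (\<Sum>a\<in>UNIV. W (a,b)) = Q b"
    and M0: "\<forall>a. M a > 0"
    and rho0: "\<forall>x y. \<rho> x y \<ge> 0"
    and dist: "(\<Sum>z\<in>UNIV. W z * \<rho> (fst z) (snd z)) < D \<or> (\<forall>z. W z > 0 \<longrightarrow> \<rho> (fst z) (snd z) = 0)"
    and D0: "D \<ge> 0" and d0: "\<delta> > 0"
begin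

definition hW :: "'a \<times> 'a \<Rightarrow> real" where
  "hW z = (if W z > 0 then ln (W z / (P (fst z) * Q (snd z))) else 0)"
definition mu :: real where "mu = (\<Sum>z\<in>UNIV. W z * hW z)"
definition muM :: real where "muM = (\<Sum>b\<in>UNIV. Q b * ln (M b))"
definition Wn :: "nat \<Rightarrow> 'a list \<Rightarrow> 'a list \<Rightarrow> real" where
  "Wn n x y = (\<Prod>i<n. W (x!i, y!i))"
definition good :: "nat \<Rightarrow> 'a list \<Rightarrow> 'a list \<Rightarrow> bool" where
  "good n x y \<longleftrightarrow> rho_n \<rho> n x y \<le> D
     \<and> Wn n x y \<le> exp (real n * (mu + \<delta>)) * (\<Prod>i<n. P (x!i)) * (\<Prod>i<n. Q (y!i))
     \<and> (\<Prod>i<n. M (y!i)) \<le> exp (real n * (muM + \<delta>))"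
definition B :: "nat \<Rightarrow> real" where
  "B n = (\<Sum>x\<in>strings n. \<Sum>y\<in>strings n. if good n x y then 0 else Wn n x y)"

lemma Q_ge: "Q b \<ge> W (a,b)"
proof -
  have "W (a,b) \<le> (\<Sum>a'\<in>UNIV. W (a',b))"
    by (rule member_le_sum) (use W0 in auto)
  then show ?thesis using WQ by simp
qed

lemma P_ge: "P a \<ge> W (a,b)"
proof -
  have "W (a,b) \<le> (\<Sum>b'\<in>UNIV. W (a,b'))"
    by (rule member_le_sum) (use W0 in auto)
  then show ?thesis using WP by simp
qed

lemma Q0: "Q b \<ge> 0" using Q_ge[of b] W0 by (meson order_trans)

lemma Q1: "(\<Sum>b\<in>UNIV. Q b) = 1"
  using WQ WP P1 by (simp add: sum.swap[of _ UNIV UNIV] flip: WQ[rule_format])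

lemma W1: "(\<Sum>z\<in>UNIV. W z) = 1"
  using WP P1 by (simp add: sum_UNIV_pair)

lemma mu_nonneg: "mu \<ge> 0"
proof -
  have pt: "W z * hW z \<ge> W z - P (fst z) * Q (snd z)" for z
  proof (cases "W z > 0")
    case True
    obtain a b where z: "z = (a,b)" by fastforce
    have pq: "P a > 0" "Q b > 0" using P0 Q_ge[of a b] True z by auto
    define u where "u = P a * Q b / W z"
    have u0: "u > 0" using pq True by (simp add: u_def)
    have "ln (W z / (P a * Q b)) = - ln u"
      using pq True by (simp add: u_def ln_div)
    also have "\<dots> \<ge> 1 - u" using ln_le_minus_one[OF u0] by simp
    finally have "W z * ln (W z / (P a * Q b)) \<ge> W z * (1 - u)"
      using True by (simp add: mult_left_mono)
    moreover have "W z * (1 - u) = W z - P a * Q b" using True by (simp add: u_def field_simps)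
    ultimately show ?thesis using True z by (simp add: hW_def)
  next
    case False
    then have "W z = 0" using W0[rule_format, of z] by linarith
    then show ?thesis using P0 Q0 by (simp add: hW_def less_imp_le)
  qed
  have "(\<Sum>z\<in>UNIV. P (fst z) * Q (snd z)) = 1"
    using P1 Q1 by (simp add: sum_UNIV_pair flip: sum_distrib_left sum_distrib_right)
  hence "(\<Sum>z\<in>UNIV. W z - P (fst z) * Q (snd z)) = 0" using W1 by (simp add: sum_subtractf)
  moreover have "(\<Sum>z\<in>UNIV. W z - P (fst z) * Q (snd z)) \<le> mu"
    unfolding mu_def by (rule sum_mono) (rule pt)
  ultimately show ?thesis by simp
qed

lemma Wn_marg: "(\<Sum>y\<in>strings n. Wn n x y) = (\<Prod>i<n. P (x!i))"
  unfolding Wn_def using sum_prod_strings[of "\<lambda>i b. W (x!i, b)" n] WP by simp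

lemma Wn_nonneg: "Wn n x y \<ge> 0"
  unfolding Wn_def using W0 by (simp add: prod_nonneg)



definition rz :: "'a \<times> 'a \<Rightarrow> real" where "rz z = \<rho> (fst z) (snd z)"
definition lz :: "'a \<times> 'a \<Rightarrow> real" where "lz z = ln (M (snd z))"

abbreviation avg :: "nat \<Rightarrow> ('a \<times> 'a \<Rightarrow> real) \<Rightarrow> ('a \<times> 'a) list \<Rightarrow> real" where
  "avg n f zs \<equiv> (\<Sum>i<n. f (zs!i)) / real n"

lemma mean_lz: "(\<Sum>z\<in>UNIV. W z * lz z) = muM"
proof -
  have "(\<Sum>z\<in>UNIV. W z * lz z) = (\<Sum>a\<in>UNIV. \<Sum>b\<in>UNIV. W (a,b) * ln (M b))"
    by (simp add: sum_UNIV_pair lz_def)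
  also have "\<dots> = (\<Sum>b\<in>UNIV. \<Sum>a\<in>UNIV. W (a,b) * ln (M b))" by (rule sum.swap)
  also have "\<dots> = (\<Sum>b\<in>UNIV. Q b * ln (M b))"
    using WQ by (simp flip: sum_distrib_right)
  finally show ?thesis by (simp add: muM_def)
qed

lemma B_pairs: "B n = (\<Sum>zs\<in>strings n. if good n (map fst zs) (map snd zs) then 0 else \<Prod>i<n. W (zs!i))"
proof -
  have "B n = (\<Sum>zs\<in>strings n. if good n (map fst zs) (map snd zs) then 0 else Wn n (map fst zs) (map snd zs))"
    unfolding B_def by (rule sum_pairs_strings)
  also have "\<dots> = (\<Sum>zs\<in>strings n. if good n (map fst zs) (map snd zs) then 0 else \<Prod>i<n. W (zs!i))"
    by (intro sum.cong refl) (auto simp: Wn_def strings_def)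
  finally show ?thesis .
qed

lemma prod_pos_each:
  assumes "(\<Prod>i<n. W (zs!i)) > 0" "i < n" shows "W (zs!i) > 0"
proof (rule ccontr)
  assume "\<not> W (zs!i) > 0"
  hence "W (zs!i) = 0" using W0[rule_format, of "zs!i"] by linarith
  hence "(\<Prod>i<n. W (zs!i)) = 0" using assms(2) by (metis finite_lessThan lessThan_iff prod_zero)
  thus False using assms(1) by linarith
qed

lemma W_factor: "W z > 0 \<Longrightarrow> W z = P (fst z) * Q (snd z) * exp (hW z)"
proof -
  assume w: "W z > 0"
  obtain a b where z: "z = (a,b)" by fastforce
  have pq: "P a > 0" "Q b > 0" using P0 Q_ge[of a b] w z by auto
  have "exp (hW z) = W z / (P a * Q b)" using w pq z by (simp add: hW_def)
  thus ?thesis using pq z by simp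
qed

lemma bad_point:
  assumes n: "n \<ge> 1" and zs: "zs \<in> strings n" and pos: "(\<Prod>i<n. W (zs!i)) > 0"
    and ng: "\<not> good n (map fst zs) (map snd zs)"
  shows "D < avg n rz zs \<or> \<delta> \<le> \<bar>avg n hW zs - mu\<bar> \<or> \<delta> \<le> \<bar>avg n lz zs - muM\<bar>"
proof -
  have len: "length zs = n" using zs by (simp add: strings_def)
  have each: "\<And>i. i < n \<Longrightarrow> W (zs!i) > 0" using prod_pos_each[OF pos] .
  have rho: "rho_n \<rho> n (map fst zs) (map snd zs) = avg n rz zs"
    using len by (simp add: rho_n_def rz_def)
  have PQ: "(\<Prod>i<n. P (map fst zs ! i)) * (\<Prod>i<n. Q (map snd zs ! i)) > 0"
    using len P0 Q_ge each
    by (intro mult_pos_pos prod_pos) (auto, metis less_le_trans prod.collapse)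
  have "Wn n (map fst zs) (map snd zs) = (\<Prod>i<n. P (fst (zs!i)) * Q (snd (zs!i)) * exp (hW (zs!i)))"
    unfolding Wn_def using len each W_factor by (intro prod.cong refl) auto
  also have "\<dots> = (\<Prod>i<n. P (map fst zs ! i)) * (\<Prod>i<n. Q (map snd zs ! i)) * exp (\<Sum>i<n. hW (zs!i))"
    using len by (simp add: prod.distrib exp_sum)
  finally have Weq: "Wn n (map fst zs) (map snd zs) = (\<Prod>i<n. P (map fst zs ! i)) * (\<Prod>i<n. Q (map snd zs ! i)) * exp (\<Sum>i<n. hW (zs!i))" .
  have Meq: "(\<Prod>i<n. M (map snd zs ! i)) = exp (\<Sum>i<n. lz (zs!i))"
    using len M0 by (simp add: exp_sum lz_def)
  have nn: "real n > 0" using n by simp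
  consider "\<not> rho_n \<rho> n (map fst zs) (map snd zs) \<le> D"
    | "\<not> Wn n (map fst zs) (map snd zs) \<le> exp (real n * (mu + \<delta>)) * (\<Prod>i<n. P (map fst zs!i)) * (\<Prod>i<n. Q (map snd zs!i))"
    | "\<not> (\<Prod>i<n. M (map snd zs!i)) \<le> exp (real n * (muM + \<delta>))"
    using ng unfolding good_def by blast
  then show ?thesis
  proof cases
    case 1 then show ?thesis using rho by simp
  next
    case 2
    have "exp (real n * (mu + \<delta>)) < exp (\<Sum>i<n. hW (zs!i))"
    proof (rule ccontr)
      assume "\<not> ?thesis"
      hence le: "exp (\<Sum>i<n. hW (zs!i)) \<le> exp (real n * (mu + \<delta>))" by simp
      have "Wn n (map fst zs) (map snd zs) \<le> ((\<Prod>i<n. P (map fst zs ! i)) * (\<Prod>i<n. Q (map snd zs ! i))) * exp (real n * (mu + \<delta>))"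
        unfolding Weq by (rule mult_left_mono[OF le]) (use PQ in simp)
      thus False using 2 by (simp add: algebra_simps)
    qed
    hence "real n * (mu + \<delta>) < (\<Sum>i<n. hW (zs!i))" by simp
    hence "mu + \<delta> < avg n hW zs" using nn by (simp add: field_simps)
    then have "\<delta> \<le> \<bar>avg n hW zs - mu\<bar>" by (simp add: abs_if)
    then show ?thesis by simp
  next
    case 3
    hence "real n * (muM + \<delta>) < (\<Sum>i<n. lz (zs!i))" unfolding Meq by simp
    hence "muM + \<delta> < avg n lz zs" using nn by (simp add: field_simps)
    then have "\<delta> \<le> \<bar>avg n lz zs - muM\<bar>" by (simp add: abs_if)
    then show ?thesis by simp
  qed
qed


lemma pW_nonneg: "(\<Prod>i<n. W (zs!i)) \<ge> 0"
  by (intro prod_nonneg) (simp add: W0[rule_format])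

lemma e1_lim: "(\<lambda>n. \<Sum>zs\<in>strings n. if D < avg n rz zs \<and> (\<Prod>i<n. W (zs!i)) > 0 then \<Prod>i<n. W (zs!i) else 0) \<longlonglongrightarrow> 0"
proof (cases "(\<Sum>z\<in>UNIV. W z * \<rho> (fst z) (snd z)) < D")
  case True
  define E where "E = (\<Sum>z\<in>UNIV. W z * rz z)"
  have ED: "E < D" using True by (simp add: E_def rz_def)
  have L: "(\<lambda>n. \<Sum>zs\<in>strings n. if D - E \<le> \<bar>avg n rz zs - E\<bar> then \<Prod>i<n. W (zs!i) else 0) \<longlonglongrightarrow> 0"
    unfolding E_def using lln[of W "D - E" rz] W0 W1 ED by (simp add: E_def)
  show ?thesis
  proof (rule tendsto_sandwich[of "\<lambda>n. 0" _ sequentially _ 0, OF _ _ tendsto_const L])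
    show "\<forall>\<^sub>F n in sequentially. 0 \<le> (\<Sum>zs\<in>strings n. if D < avg n rz zs \<and> (\<Prod>i<n. W (zs!i)) > 0 then \<Prod>i<n. W (zs!i) else 0)"
      by (intro always_eventually allI sum_nonneg) auto
    show "\<forall>\<^sub>F n in sequentially. (\<Sum>zs\<in>strings n. if D < avg n rz zs \<and> (\<Prod>i<n. W (zs!i)) > 0 then \<Prod>i<n. W (zs!i) else 0)
       \<le> (\<Sum>zs\<in>strings n. if D - E \<le> \<bar>avg n rz zs - E\<bar> then \<Prod>i<n. W (zs!i) else 0)"
      using ED by (intro always_eventually allI sum_mono) (auto simp: abs_if pW_nonneg less_le)
  qed
next
  case False
  hence z: "\<forall>z. W z > 0 \<longrightarrow> \<rho> (fst z) (snd z) = 0" using dist by simp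
  have "(\<Sum>zs\<in>strings n. if D < avg n rz zs \<and> (\<Prod>i<n. W (zs!i)) > 0 then \<Prod>i<n. W (zs!i) else 0) = 0" for n
  proof (intro sum.neutral ballI)
    fix zs :: "('a \<times> 'a) list" assume "zs \<in> strings n"
    show "(if D < avg n rz zs \<and> (\<Prod>i<n. W (zs!i)) > 0 then \<Prod>i<n. W (zs!i) else 0) = 0"
    proof (cases "(\<Prod>i<n. W (zs!i)) > 0")
      case True
      have "(\<Sum>i<n. rz (zs!i)) = 0"
        using prod_pos_each[OF True] z by (intro sum.neutral) (auto simp: rz_def)
      then show ?thesis using D0 by simp
    qed simp
  qed
  then show ?thesis by simp
qed

lemma B_lim: "B \<longlonglongrightarrow> 0"
proof -
  define e1 where "e1 n = (\<Sum>zs\<in>strings n. if D < avg n rz zs \<and> (\<Prod>i<n. W (zs!i)) > 0 then \<Prod>i<n. W (zs!i) else 0)" for n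
  define e2 where "e2 n = (\<Sum>zs\<in>strings n. if \<delta> \<le> \<bar>avg n hW zs - mu\<bar> then \<Prod>i<n. W (zs!i) else 0)" for n
  define e3 where "e3 n = (\<Sum>zs\<in>strings n. if \<delta> \<le> \<bar>avg n lz zs - muM\<bar> then \<Prod>i<n. W (zs!i) else 0)" for n
  have l1: "e1 \<longlonglongrightarrow> 0" unfolding e1_def by (rule e1_lim)
  have l2: "e2 \<longlonglongrightarrow> 0" unfolding e2_def mu_def using lln[of W \<delta> hW] W0 W1 d0 by simp
  have l3: "e3 \<longlonglongrightarrow> 0" unfolding e3_def mean_lz[symmetric] using lln[of W \<delta> lz] W0 W1 d0 by simp
  have B0: "B n \<ge> 0" for n
    unfolding B_def using Wn_nonneg by (intro sum_nonneg) auto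
  have Ble: "B n \<le> e1 n + e2 n + e3 n" if n: "n \<ge> 1" for n
  proof -
    have "B n \<le> (\<Sum>zs\<in>strings n.
        (if D < avg n rz zs \<and> (\<Prod>i<n. W (zs!i)) > 0 then \<Prod>i<n. W (zs!i) else 0)
      + (if \<delta> \<le> \<bar>avg n hW zs - mu\<bar> then \<Prod>i<n. W (zs!i) else 0)
      + (if \<delta> \<le> \<bar>avg n lz zs - muM\<bar> then \<Prod>i<n. W (zs!i) else 0))"
      unfolding B_pairs
    proof (rule sum_mono)
      fix zs :: "('a \<times> 'a) list" assume zs: "zs \<in> strings n"
      have pn: "(\<Prod>i<n. W (zs!i)) \<ge> 0" by (rule pW_nonneg)
      show "(if good n (map fst zs) (map snd zs) then 0 else \<Prod>i<n. W (zs!i))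
         \<le> (if D < avg n rz zs \<and> (\<Prod>i<n. W (zs!i)) > 0 then \<Prod>i<n. W (zs!i) else 0)
          + (if \<delta> \<le> \<bar>avg n hW zs - mu\<bar> then \<Prod>i<n. W (zs!i) else 0)
          + (if \<delta> \<le> \<bar>avg n lz zs - muM\<bar> then \<Prod>i<n. W (zs!i) else 0)"
      proof (cases "good n (map fst zs) (map snd zs) \<or> \<not> (\<Prod>i<n. W (zs!i)) > 0")
        case True
        then show ?thesis using pn by auto
      next
        case False
        then have "D < avg n rz zs \<or> \<delta> \<le> \<bar>avg n hW zs - mu\<bar> \<or> \<delta> \<le> \<bar>avg n lz zs - muM\<bar>"
          using bad_point[OF n zs] by blast
        then show ?thesis using False pn by auto
      qed
    qed
    also have "\<dots> = e1 n + e2 n + e3 n" unfolding e1_def e2_def e3_def by (simp add: sum.distrib)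
    finally show ?thesis .
  qed
  have "(\<lambda>n. e1 n + e2 n + e3 n) \<longlonglongrightarrow> 0" using tendsto_add[OF tendsto_add[OF l1 l2] l3] by simp
  then show ?thesis
    by (intro tendsto_sandwich[of "\<lambda>n. 0" B sequentially "\<lambda>n. e1 n + e2 n + e3 n" 0])
       (use B0 Ble in \<open>auto simp: eventually_sequentially\<close>)
qed

end

context cover_setup begin

definition unc :: "nat \<Rightarrow> 'a list set \<Rightarrow> real" where
  "unc n C = (\<Sum>x\<in>strings n. if x \<notin> blowup \<rho> n D C then \<Prod>i<n. P (x!i) else 0)"

lemma exists_bmin: "\<exists>bmin. \<forall>b. M bmin \<le> M b"
proof -
  have "finite (range M)" "range M \<noteq> {}" by auto
  then obtain bmin where "M bmin = Min (range M)" by (metis Min_in imageE)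
  then show ?thesis by (metis Min_le finite UNIV_I finite_imageI image_eqI)
qed

lemma Pn_pos: "(\<Prod>i<n. P (x!i)) > 0" using P0 by (simp add: prod_pos)
lemma Qn_nonneg: "(\<Prod>i<n. Q (x!i)) \<ge> 0" using Q0 by (simp add: prod_nonneg)
lemma Qn_sum: "(\<Sum>y\<in>strings n. \<Prod>i<n. Q (y!i)) = 1" using sum_pn_1[OF Q1] .

lemma codebook:
  assumes n: "n \<ge> 1"
  shows "\<exists>C. C \<subseteq> strings n \<and> C \<noteq> {}
     \<and> prod_meas M n C \<le> 3 * exp (real n * (mu + 2*\<delta>)) * exp (real n * (muM + \<delta>))
     \<and> unc n C \<le> B n + exp (- exp (real n * \<delta>))"
proof -
  obtain bmin where bmin: "\<forall>b. M bmin \<le> M b" using exists_bmin by blast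
  define ymin where "ymin = replicate n bmin"
  define a where "a = exp (- (real n * (mu + \<delta>)))"
  define N where "N = nat \<lceil>exp (real n * (mu + 2*\<delta>))\<rceil>"
  define Mb where "Mb = exp (real n * (muM + \<delta>))"
  define Cof where "Cof cs = {y \<in> set cs. (\<Prod>i<n. M (y!i)) \<le> Mb} \<union> {ymin}" for cs
  define CB where "CB = lists_in (strings n :: 'a list set) N"
  define Qn where "Qn y = (\<Prod>i<n. Q (y!i))" for y :: "'a list"
  define Pn where "Pn x = (\<Prod>i<n. P (x!i))" for x :: "'a list"
  define wt where "wt cs = (\<Prod>j<N. Qn (cs!j))" for cs :: "'a list list"
  define w where "w x = (\<Sum>y\<in>strings n. if good n x y then Wn n x y else 0) / Pn x" for x
  define c where "c = exp (- (a * real N))"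
  have mu0: "mu \<ge> 0" by (rule mu_nonneg)
  have a01: "0 < a" "a \<le> 1" using mu0 d0 by (auto simp: a_def)
  have Pn_pos': "Pn x > 0" for x unfolding Pn_def by (rule Pn_pos)
  have fin_CB: "finite CB" unfolding CB_def by (rule finite_lists_in) (rule finite_strings)
  have wt_sum: "(\<Sum>cs\<in>CB. wt cs) = 1"
    unfolding CB_def wt_def using sum_prod_lists[OF finite_strings, of "\<lambda>j. Qn" N n]
    by (simp add: Qn_def Qn_sum)
  have wt_nn: "wt cs \<ge> 0" for cs unfolding wt_def Qn_def by (simp add: prod_nonneg Qn_nonneg)
  have ymin_s: "ymin \<in> strings n" by (simp add: ymin_def strings_def)
  have ymin_M: "(\<Prod>i<n. M (ymin!i)) \<le> Mb"
  proof -
    have "(\<Prod>i<n. M (ymin!i)) = M bmin ^ n" by (simp add: ymin_def)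
    also have "\<dots> = exp (real n * ln (M bmin))" using M0 by (simp add: exp_of_nat_mult)
    also have "\<dots> \<le> Mb"
    proof -
      have "ln (M bmin) = (\<Sum>b\<in>UNIV. Q b * ln (M bmin))" using Q1 by (simp flip: sum_distrib_right)
      also have "\<dots> \<le> muM" unfolding muM_def
        using bmin M0 Q0 by (intro sum_mono mult_left_mono) auto
      finally show ?thesis unfolding Mb_def using d0 by (simp add: mult_left_mono)
    qed
    finally show ?thesis .
  qed
  have ind: "(if x \<notin> blowup \<rho> n D (Cof cs) then Pn x else 0)
      \<le> Pn x * (\<Prod>j<N. if good n x (cs!j) then 0 else 1)"
    if x: "x \<in> strings n" and cs: "cs \<in> CB" for x cs
  proof (cases "x \<in> blowup \<rho> n D (Cof cs)")
    case True
    then show ?thesis using Pn_pos'[of x] by (simp add: less_imp_le prod_nonneg)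
  next
    case False
    have "\<not> good n x (cs!j)" if j: "j < N" for j
    proof
      assume g: "good n x (cs!j)"
      have "cs!j \<in> set cs" using cs j by (simp add: CB_def lists_in_def)
      hence "cs!j \<in> Cof cs" using g by (simp add: Cof_def good_def Mb_def)
      hence "x \<in> blowup \<rho> n D (Cof cs)" using g x by (auto simp: blowup_def good_def)
      thus False using False by simp
    qed
    then show ?thesis using False by simp
  qed
  have perx: "(\<Sum>y\<in>strings n. Qn y * (if good n x y then 0 else 1)) ^ N \<le> 1 - w x + c"
    if x: "x \<in> strings n" for x
  proof -
    define q where "q = (\<Sum>y\<in>strings n. Qn y * (if good n x y then 1 else 0))"
    have q1: "(\<Sum>y\<in>strings n. Qn y * (if good n x y then 0 else 1)) = 1 - q"
    proof -
      have "(\<Sum>y\<in>strings n. Qn y * (if good n x y then 0 else 1)) + q = (\<Sum>y\<in>strings n. Qn y)"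
        unfolding q_def by (simp flip: sum.distrib) (intro sum.cong, auto)
      thus ?thesis using Qn_sum by (simp add: Qn_def)
    qed
    have qle: "q \<le> 1"
    proof -
      have "q \<le> (\<Sum>y\<in>strings n. Qn y)" unfolding q_def
        by (intro sum_mono) (auto simp: Qn_def Qn_nonneg)
      thus ?thesis using Qn_sum by (simp add: Qn_def)
    qed
    have wx: "w x * Pn x = (\<Sum>y\<in>strings n. if good n x y then Wn n x y else 0)"
      unfolding w_def using Pn_pos'[of x] by simp
    have w0: "0 \<le> w x" unfolding w_def using Pn_pos'[of x] Wn_nonneg
      by (intro divide_nonneg_pos sum_nonneg) auto
    have w1: "w x \<le> 1"
    proof -
      have "(\<Sum>y\<in>strings n. if good n x y then Wn n x y else 0) \<le> (\<Sum>y\<in>strings n. Wn n x y)"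
        using Wn_nonneg by (intro sum_mono) auto
      also have "\<dots> = Pn x" unfolding Pn_def by (rule Wn_marg)
      finally show ?thesis unfolding w_def using Pn_pos'[of x] by simp
    qed
    have qa: "a * w x \<le> q"
    proof -
      have "a * w x = (\<Sum>y\<in>strings n. if good n x y then a * Wn n x y / Pn x else 0)"
        unfolding w_def by (simp add: sum_distrib_left sum_divide_distrib) (intro sum.cong, auto)
      also have "\<dots> \<le> q" unfolding q_def
      proof (intro sum_mono)
        fix y :: "'a list" assume "y \<in> strings n"
        show "(if good n x y then a * Wn n x y / Pn x else 0) \<le> Qn y * (if good n x y then 1 else 0)"
        proof (cases "good n x y")
          case True
          hence "Wn n x y \<le> exp (real n * (mu + \<delta>)) * Pn x * Qn y"
            by (simp add: good_def Pn_def Qn_def)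
          hence "a * Wn n x y \<le> a * (exp (real n * (mu + \<delta>)) * Pn x * Qn y)"
            using a01 by (simp add: mult_left_mono)
          also have "\<dots> = (a * exp (real n * (mu + \<delta>))) * (Pn x * Qn y)" by (simp add: mult_ac)
          also have "a * exp (real n * (mu + \<delta>)) = 1" by (simp add: a_def flip: exp_add)
          finally have "a * Wn n x y \<le> Pn x * Qn y" by simp
          then show ?thesis using True Pn_pos'[of x] by (simp add: divide_le_eq mult.commute)
        qed (simp add: Qn_def Qn_nonneg)
      qed
      finally show ?thesis .
    qed
    have "(1 - q) ^ N \<le> (1 - a * w x) ^ N"
      using qa qle by (intro power_mono) auto
    also have "(1 - a * w x) = 1 - w x + w x * (1 - a)" by (simp add: algebra_simps)
    also have "(1 - w x + w x * (1 - a)) ^ N \<le> 1 - w x + w x * (1 - a) ^ N"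
      using w0 w1 a01 by (intro pow_convex_ineq) auto
    also have "\<dots> \<le> 1 - w x + (1 - a) ^ N"
      using mult_left_le_one_le[of "(1 - a) ^ N" "w x"] w0 w1 a01 by simp
    also have "(1 - a) ^ N \<le> exp (- a) ^ N"
      using a01 by (intro power_mono) (auto simp: exp_ge_add_one_self[of "-a", simplified])
    also have "exp (- a) ^ N = c" by (simp add: c_def exp_of_nat_mult[symmetric] mult.commute)
    finally show ?thesis using q1 by simp
  qed
  have E: "(\<Sum>cs\<in>CB. wt cs * unc n (Cof cs)) \<le> B n + c"
  proof -
    have "(\<Sum>cs\<in>CB. wt cs * unc n (Cof cs))
        \<le> (\<Sum>cs\<in>CB. wt cs * (\<Sum>x\<in>strings n. Pn x * (\<Prod>j<N. if good n x (cs!j) then 0 else 1)))"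
      unfolding unc_def Pn_def[symmetric]
      by (intro sum_mono mult_left_mono wt_nn) (use ind in auto)
    also have "\<dots> = (\<Sum>x\<in>strings n. Pn x * (\<Sum>cs\<in>CB. \<Prod>j<N. Qn (cs!j) * (if good n x (cs!j) then 0 else 1)))"
      unfolding wt_def
      by (simp add: sum_distrib_left sum_distrib_right prod.distrib mult_ac sum.swap[of _ CB])
    also have "\<dots> = (\<Sum>x\<in>strings n. Pn x * (\<Sum>y\<in>strings n. Qn y * (if good n x y then 0 else 1)) ^ N)"
      unfolding CB_def
    proof (intro sum.cong refl arg_cong2[where f = "(*)"])
      fix x :: "'a list"
      show "(\<Sum>cs\<in>lists_in (strings n) N. \<Prod>j<N. Qn (cs ! j) * (if good n x (cs ! j) then 0 else 1))
         = (\<Sum>y\<in>strings n. Qn y * (if good n x y then 0 else 1)) ^ N"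
        using sum_prod_lists[OF finite_strings, of "\<lambda>j y. Qn y * (if good n x y then 0 else 1)" N n]
        by simp
    qed
    also have "\<dots> \<le> (\<Sum>x\<in>strings n. Pn x * (1 - w x + c))"
      by (intro sum_mono mult_left_mono perx) (auto simp: less_imp_le Pn_pos')
    also have "\<dots> = (\<Sum>x\<in>strings n. (\<Sum>y\<in>strings n. if good n x y then 0 else Wn n x y) + Pn x * c)"
    proof (intro sum.cong refl)
      fix x :: "'a list" assume x: "x \<in> strings n"
      have "Pn x * w x = (\<Sum>y\<in>strings n. if good n x y then Wn n x y else 0)"
        unfolding w_def using Pn_pos'[of x] by simp
      moreover have "Pn x = (\<Sum>y\<in>strings n. Wn n x y)" unfolding Pn_def by (simp add: Wn_marg)
      moreover have "(\<Sum>y\<in>strings n. Wn n x y) = (\<Sum>y\<in>strings n. if good n x y then 0 else Wn n x y)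
          + (\<Sum>y\<in>strings n. if good n x y then Wn n x y else 0)"
        by (simp flip: sum.distrib) (intro sum.cong, auto)
      ultimately show "Pn x * (1 - w x + c) = (\<Sum>y\<in>strings n. if good n x y then 0 else Wn n x y) + Pn x * c"
        by (simp add: algebra_simps)
    qed
    also have "\<dots> = B n + c"
      unfolding B_def using sum_pn_1[OF P1, of n]
      by (simp add: sum.distrib Pn_def flip: sum_distrib_right)
    finally show ?thesis .
  qed
  have cb: "c \<le> exp (- exp (real n * \<delta>))"
  proof -
    have Nge: "real N \<ge> exp (real n * (mu + 2*\<delta>))" unfolding N_def by linarith
    have "a * exp (real n * (mu + 2*\<delta>)) = exp (real n * \<delta>)"
      by (simp add: a_def flip: exp_add) (simp add: algebra_simps)
    hence "exp (real n * \<delta>) \<le> a * real N" using Nge a01 by (metis mult_left_mono less_imp_le)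
    thus ?thesis unfolding c_def by simp
  qed
  obtain cs where cs: "cs \<in> CB" "unc n (Cof cs) \<le> B n + exp (- exp (real n * \<delta>))"
    using averaging[OF fin_CB, of wt "\<lambda>cs. unc n (Cof cs)" "B n + exp (- exp (real n * \<delta>))"]
      wt_nn wt_sum E cb by force
  have sub: "Cof cs \<subseteq> strings n" using cs(1) ymin_s by (auto simp: Cof_def CB_def lists_in_def)
  have ne: "Cof cs \<noteq> {}" by (simp add: Cof_def)
  have card: "card (Cof cs) \<le> N + 1"
  proof -
    have "card (Cof cs) \<le> card {y \<in> set cs. (\<Prod>i<n. M (y!i)) \<le> Mb} + card {ymin}"
      unfolding Cof_def by (rule card_Un_le)
    also have "card {y \<in> set cs. (\<Prod>i<n. M (y!i)) \<le> Mb} \<le> card (set cs)" by (intro card_mono) auto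
    also have "card (set cs) \<le> length cs" by (rule card_length)
    finally show ?thesis using cs(1) by (simp add: CB_def lists_in_def)
  qed
  have pm: "prod_meas M n (Cof cs) \<le> real (card (Cof cs)) * Mb"
  proof -
    have "prod_meas M n (Cof cs) \<le> (\<Sum>y\<in>Cof cs. Mb)"
      unfolding prod_meas_def using ymin_M by (intro sum_mono) (auto simp: Cof_def)
    thus ?thesis by simp
  qed
  have "real (card (Cof cs)) \<le> real N + 1" using card by linarith
  also have "real N \<le> exp (real n * (mu + 2*\<delta>)) + 1"
  proof -
    define t where "t = exp (real n * (mu + 2*\<delta>))"
    have t0: "t > 0" by (simp add: t_def)
    hence "\<lceil>t\<rceil> \<ge> 0" by (meson ceiling_le_zero le_cases less_le_not_le order.trans zero_le_ceiling)
    hence "real N = of_int \<lceil>t\<rceil>" unfolding N_def t_def[symmetric] by simp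
    also have "\<dots> \<le> t + 1" using ceiling_correct[of t] by linarith
    finally show ?thesis by (simp add: t_def)
  qed
  also have "exp (real n * (mu + 2*\<delta>)) + 1 + 1 \<le> 3 * exp (real n * (mu + 2*\<delta>))"
  proof -
    have "1 \<le> exp (real n * (mu + 2*\<delta>))" using mu0 d0 by simp
    thus ?thesis by linarith
  qed
  finally have "prod_meas M n (Cof cs) \<le> 3 * exp (real n * (mu + 2*\<delta>)) * Mb"
    using pm by (smt (verit) Mb_def exp_gt_zero mult_right_mono)
  then show ?thesis using sub ne cs(2) unfolding Mb_def by blast
qed

lemma unc_nonneg: "unc n C \<ge> 0"
  unfolding unc_def using Pn_pos by (intro sum_nonneg) (auto simp: less_imp_le)

lemma achieve:
  "\<exists>C. (\<forall>n. C n \<subseteq> strings n \<and> C n \<noteq> {})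
     \<and> (\<forall>\<^sub>F n in sequentially. norm_log_meas M n (C n) \<le> ereal (mu + muM + 4 * \<delta>))
     \<and> (\<lambda>n. unc n (C n)) \<longlonglongrightarrow> 0"
proof -
  have "\<forall>n. \<exists>C. C \<subseteq> strings n \<and> C \<noteq> {} \<and> (n \<ge> 1 \<longrightarrow>
     prod_meas M n C \<le> 3 * exp (real n * (mu + 2*\<delta>)) * exp (real n * (muM + \<delta>))
     \<and> unc n C \<le> B n + exp (- exp (real n * \<delta>)))"
  proof
    fix n :: nat
    show "\<exists>C. C \<subseteq> strings n \<and> C \<noteq> {} \<and> (n \<ge> 1 \<longrightarrow>
     prod_meas M n C \<le> 3 * exp (real n * (mu + 2*\<delta>)) * exp (real n * (muM + \<delta>))
     \<and> unc n C \<le> B n + exp (- exp (real n * \<delta>)))"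
    proof (cases "n \<ge> 1")
      case True
      then show ?thesis using codebook[OF True] by blast
    next
      case False
      hence "n = 0" by simp
      then show ?thesis by (intro exI[of _ "{[]}"]) (auto simp: strings_def)
    qed
  qed
  then obtain C where C: "\<And>n. C n \<subseteq> strings n" "\<And>n. C n \<noteq> {}"
    "\<And>n. n \<ge> 1 \<Longrightarrow> prod_meas M n (C n) \<le> 3 * exp (real n * (mu + 2*\<delta>)) * exp (real n * (muM + \<delta>))"
    "\<And>n. n \<ge> 1 \<Longrightarrow> unc n (C n) \<le> B n + exp (- exp (real n * \<delta>))"
    by metis
  have lim_e: "(\<lambda>n. exp (- exp (real n * \<delta>))) \<longlonglongrightarrow> 0"
  proof -
    have inv: "(\<lambda>n. inverse \<delta> * inverse (real n)) \<longlonglongrightarrow> 0"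
      by (intro tendsto_mult_right_zero) (rule lim_inverse_n)
    have le: "exp (- exp (real n * \<delta>)) \<le> inverse \<delta> * inverse (real n)" if n: "n \<ge> 1" for n
    proof -
      have "real n * \<delta> > 0" using n d0 by simp
      have h1: "real n * \<delta> \<le> exp (real n * \<delta>)"
        by (smt (verit) exp_ge_add_one_self)
      also have "exp (real n * \<delta>) \<le> exp (exp (real n * \<delta>))"
        using h1 by simp
      finally have "inverse (exp (exp (real n * \<delta>))) \<le> inverse (real n * \<delta>)"
        using \<open>real n * \<delta> > 0\<close> by (intro le_imp_inverse_le) auto
      thus ?thesis by (simp add: exp_minus mult.commute)
    qed
    show ?thesis
    proof (rule tendsto_sandwich[of "\<lambda>n. 0" _ sequentially "\<lambda>n. inverse \<delta> * inverse (real n)" 0, OF _ _ tendsto_const inv])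
      show "\<forall>\<^sub>F n in sequentially. 0 \<le> exp (- exp (real n * \<delta>))" by simp
      show "\<forall>\<^sub>F n in sequentially. exp (- exp (real n * \<delta>)) \<le> inverse \<delta> * inverse (real n)"
        using eventually_ge_at_top[of 1] by (rule eventually_mono) (rule le)
    qed
  qed
  have limBe: "(\<lambda>n. B n + exp (- exp (real n * \<delta>))) \<longlonglongrightarrow> 0"
    using tendsto_add[OF B_lim lim_e] by simp
  have unc_lim: "(\<lambda>n. unc n (C n)) \<longlonglongrightarrow> 0"
  proof (rule tendsto_sandwich[of "\<lambda>n. 0" _ sequentially "\<lambda>n. B n + exp (- exp (real n * \<delta>))" 0, OF _ _ tendsto_const limBe])
    show "\<forall>\<^sub>F n in sequentially. 0 \<le> unc n (C n)" by (simp add: unc_nonneg)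
    show "\<forall>\<^sub>F n in sequentially. unc n (C n) \<le> B n + exp (- exp (real n * \<delta>))"
      using eventually_ge_at_top[of 1] by (rule eventually_mono) (rule C(4))
  qed
  have "\<forall>\<^sub>F n in sequentially. ln 3 / real n \<le> \<delta>"
  proof -
    have "(\<lambda>n. ln 3 * inverse (real n)) \<longlonglongrightarrow> 0"
      by (intro tendsto_mult_right_zero) (rule lim_inverse_n)
    hence "(\<lambda>n. ln 3 / real n) \<longlonglongrightarrow> 0" by (simp add: divide_inverse)
    hence "\<forall>\<^sub>F n in sequentially. ln 3 / real n < \<delta>" using d0 by (simp add: order_tendsto_iff)
    then show ?thesis by (rule eventually_mono) simp
  qed
  note ev3 = this
  have pt: "norm_log_meas M n (C n) \<le> ereal (mu + muM + 4 * \<delta>)"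
    if l3: "ln 3 / real n \<le> \<delta>" and n: "n \<ge> 1" for n
  proof -
    have fin: "finite (C n)" using C(1) finite_strings by (rule finite_subset)
    have pos: "prod_meas M n (C n) > 0"
      unfolding prod_meas_def using fin C(2) M0 by (intro sum_pos prod_pos) auto
    have "ln (prod_meas M n (C n)) \<le> ln (3 * exp (real n * (mu + 2*\<delta>)) * exp (real n * (muM + \<delta>)))"
      using C(3)[OF n] pos by simp
    also have "\<dots> = ln 3 + real n * (mu + 2*\<delta>) + real n * (muM + \<delta>)" by (simp add: ln_mult)
    finally have L: "ln (prod_meas M n (C n)) / real n \<le> (ln 3 + real n * (mu + 2*\<delta>) + real n * (muM + \<delta>)) / real n"
      by (rule divide_right_mono) simp
    have "(ln 3 + real n * (mu + 2*\<delta>) + real n * (muM + \<delta>)) / real n = ln 3 / real n + (mu + 2*\<delta>) + (muM + \<delta>)"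
      using n by (simp add: add_divide_distrib)
    with L have "ln (prod_meas M n (C n)) / real n \<le> ln 3 / real n + (mu + 2*\<delta>) + (muM + \<delta>)" by simp
    also have "\<dots> \<le> mu + muM + 4 * \<delta>" using l3 by simp
    finally show "norm_log_meas M n (C n) \<le> ereal (mu + muM + 4 * \<delta>)"
      unfolding norm_log_meas_def using pos by simp
  qed
  have ev: "\<forall>\<^sub>F n in sequentially. norm_log_meas M n (C n) \<le> ereal (mu + muM + 4 * \<delta>)"
    using eventually_conj[OF ev3 eventually_ge_at_top[of 1]] by (rule eventually_mono) (use pt in blast)
  show ?thesis using C(1,2) ev unc_lim by blast
qed

end

definition hWg :: "('a \<Rightarrow> real) \<Rightarrow> ('a \<Rightarrow> real) \<Rightarrow> ('a \<times> 'a \<Rightarrow> real) \<Rightarrow> 'a \<times> 'a \<Rightarrow> real" where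
  "hWg P Q W z = (if W z > 0 then ln (W z / (P (fst z) * Q (snd z))) else 0)"
definition mug :: "('a::finite \<Rightarrow> real) \<Rightarrow> ('a \<Rightarrow> real) \<Rightarrow> ('a \<times> 'a \<Rightarrow> real) \<Rightarrow> real" where
  "mug P Q W = (\<Sum>z\<in>UNIV. W z * hWg P Q W z)"
definition muMg :: "('a::finite \<Rightarrow> real) \<Rightarrow> ('a \<Rightarrow> real) \<Rightarrow> real" where
  "muMg M Q = (\<Sum>b\<in>UNIV. Q b * ln (M b))"
definition uncg :: "('a \<Rightarrow> real) \<Rightarrow> ('a \<Rightarrow> 'a \<Rightarrow> real) \<Rightarrow> real \<Rightarrow> nat \<Rightarrow> 'a list set \<Rightarrow> real" where
  "uncg P \<rho> D n C = (\<Sum>x\<in>strings n. if x \<notin> blowup \<rho> n D C then \<Prod>i<n. P (x!i) else 0)"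

lemma achieve_global:
  fixes P Q :: "'a::finite \<Rightarrow> real" and W :: "'a \<times> 'a \<Rightarrow> real"
  assumes P0: "\<forall>a. P a > 0" and P1: "(\<Sum>a\<in>UNIV. P a) = 1"
    and W0: "\<forall>z. W z \<ge> 0"
    and WP: "\<forall>a. (\<Sum>b\<in>UNIV. W (a,b)) = P a"
    and WQ: "\<forall>b. (\<Sum>a\<in>UNIV. W (a,b)) = Q b"
    and M0: "\<forall>a. M a > 0"
    and rho0: "\<forall>x y. \<rho> x y \<ge> 0"
    and dist: "(\<Sum>z\<in>UNIV. W z * \<rho> (fst z) (snd z)) < D \<or> (\<forall>z. W z > 0 \<longrightarrow> \<rho> (fst z) (snd z) = 0)"
    and D0: "D \<ge> 0" and lt: "mug P Q W + muMg M Q < a"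
  shows "\<exists>C. (\<forall>n. C n \<subseteq> strings n \<and> C n \<noteq> {})
     \<and> (\<forall>\<^sub>F n in sequentially. norm_log_meas M n (C n) \<le> ereal a)
     \<and> (\<lambda>n. uncg P \<rho> D n (C n)) \<longlonglongrightarrow> 0"
proof -
  define \<delta> where "\<delta> = (a - mug P Q W - muMg M Q) / 4"
  have d0: "\<delta> > 0" using lt by (simp add: \<delta>_def)
  interpret cs: cover_setup P Q W \<rho> M D \<delta>
    using assms d0 by unfold_locales auto
  have mu_eq: "cs.mu = mug P Q W" by (simp add: cs.mu_def mug_def cs.hW_def hWg_def)
  have muM_eq: "cs.muM = muMg M Q" by (simp add: cs.muM_def muMg_def)
  have unc_eq: "cs.unc n C = uncg P \<rho> D n C" for n C by (simp add: cs.unc_def uncg_def)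
  have a_eq: "cs.mu + cs.muM + 4 * \<delta> = a" using mu_eq muM_eq by (simp add: \<delta>_def field_simps)
  show ?thesis using cs.achieve unfolding a_eq unc_eq by blast
qed

lemma mixing:
  fixes P Q :: "'a::finite \<Rightarrow> real" and W :: "'a \<times> 'a \<Rightarrow> real"
  assumes P0: "\<forall>a. P a > 0" and P1: "(\<Sum>a\<in>UNIV. P a) = 1"
    and W0: "\<forall>z. W z \<ge> 0"
    and WP: "\<forall>a. (\<Sum>b\<in>UNIV. W (a,b)) = P a"
    and WQ: "\<forall>b. (\<Sum>a\<in>UNIV. W (a,b)) = Q b"
    and rho0: "\<forall>x y. \<rho> x y \<ge> 0"
    and rho_eq: "\<forall>x y. \<rho> x y = 0 \<longleftrightarrow> x = y"
    and D0: "D \<ge> 0" and WD: "(\<Sum>z\<in>UNIV. W z * \<rho> (fst z) (snd z)) \<le> D"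
    and lt: "mug P Q W + muMg M Q < a"
  shows "\<exists>Q' W'. (\<forall>z. W' z \<ge> 0) \<and> (\<forall>a. (\<Sum>b\<in>UNIV. W' (a,b)) = P a)
     \<and> (\<forall>b. (\<Sum>a\<in>UNIV. W' (a,b)) = Q' b)
     \<and> ((\<Sum>z\<in>UNIV. W' z * \<rho> (fst z) (snd z)) < D \<or> (\<forall>z. W' z > 0 \<longrightarrow> \<rho> (fst z) (snd z) = 0))
     \<and> mug P Q' W' + muMg M Q' < a"
proof (cases "D = 0")
  case True
  have nn: "W z * \<rho> (fst z) (snd z) \<ge> 0" for z using W0[rule_format, of z] rho0 by simp
  have s0: "0 \<le> (\<Sum>z\<in>UNIV. W z * \<rho> (fst z) (snd z))" by (rule sum_nonneg) (rule nn)
  have s1: "(\<Sum>z\<in>UNIV. W z * \<rho> (fst z) (snd z)) = 0"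
    using WD True s0 by linarith
  have "W z * \<rho> (fst z) (snd z) = 0" for z
  proof -
    have "\<forall>z\<in>UNIV. W z * \<rho> (fst z) (snd z) = 0"
      using s1 sum_nonneg_eq_0_iff[OF finite, of UNIV "\<lambda>z. W z * \<rho> (fst z) (snd z)"] nn by blast
    thus ?thesis by blast
  qed
  hence "\<forall>z. W z > 0 \<longrightarrow> \<rho> (fst z) (snd z) = 0" by (metis less_irrefl mult_eq_0_iff)
  then show ?thesis using W0 WP WQ lt by blast
next
  case False
  hence Dpos: "D > 0" using D0 by simp
  have Q_ge: "Q b \<ge> W (a,b)" for a b
  proof -
    have "W (a,b) \<le> (\<Sum>a'\<in>UNIV. W (a',b))" by (rule member_le_sum) (use W0 in auto)
    then show ?thesis using WQ by simp
  qed
  have Q0: "Q b \<ge> 0" for b using Q_ge[of b b] W0 by (meson order_trans)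
  define Wt where "Wt t z = (1 - t) * W z + t * (if fst z = snd z then P (fst z) else 0)" for t :: real and z
  define Qt where "Qt t b = (1 - t) * Q b + t * P b" for t :: real and b
  define g where "g t z = (if W z > 0 then Wt t z * ln (Wt t z / (P (fst z) * Qt t (snd z)))
      else t * \<bar>P (fst z) * ln (P (fst z))\<bar>)" for t :: real and z
  define G where "G t = (\<Sum>z\<in>UNIV. g t z) + (\<Sum>b\<in>UNIV. Qt t b * ln (M b))" for t
  have G0: "G 0 = mug P Q W + muMg M Q"
    unfolding G_def mug_def muMg_def
    by (intro arg_cong2[where f = "(+)"] sum.cong refl) (auto simp: g_def Wt_def Qt_def hWg_def)
  have contg: "isCont (\<lambda>t. g t z) 0" for z
  proof (cases "W z > 0")
    case True
    obtain a b where z: "z = (a,b)" by fastforce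
    have pos: "P a > 0" "Q b > 0" using P0 Q_ge[of a b] True z by auto
    have "isCont (\<lambda>t. Wt t z * ln (Wt t z / (P a * Qt t b))) 0"
      unfolding Wt_def Qt_def using pos True z by (intro continuous_intros) auto
    then show ?thesis using True z by (simp add: g_def)
  next
    case False
    then show ?thesis unfolding g_def by (simp add: continuous_intros)
  qed
  have "isCont G 0" unfolding G_def Qt_def
    using contg by (intro continuous_intros) auto
  hence "(G \<longlongrightarrow> G 0) (at_right 0)"
    unfolding isCont_def by (rule tendsto_within_subset) simp
  hence "\<forall>\<^sub>F t in at_right 0. G t < a" using lt G0 by (simp add: order_tendstoD(2))
  then obtain b0 where b0: "b0 > 0" "\<And>t. 0 < t \<Longrightarrow> t < b0 \<Longrightarrow> G t < a"
    unfolding eventually_at_right_field by auto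
  define t where "t = min (b0 / 2) (1 / 2)"
  have t: "0 < t" "t < 1" "G t < a" using b0 by (auto simp: t_def)
  have Wt0: "\<forall>z. Wt t z \<ge> 0" using t W0 P0 by (auto simp: Wt_def less_imp_le)
  have WtP: "\<forall>a. (\<Sum>b\<in>UNIV. Wt t (a,b)) = P a"
  proof
    fix a
    have "(\<Sum>b\<in>UNIV. Wt t (a,b)) = (1 - t) * (\<Sum>b\<in>UNIV. W (a,b)) + t * (\<Sum>b\<in>UNIV. if a = b then P a else 0)"
      unfolding Wt_def by (simp only: fst_conv snd_conv sum.distrib sum_distrib_left)
    also have "\<dots> = P a" using WP by (simp add: algebra_simps)
    finally show "(\<Sum>b\<in>UNIV. Wt t (a,b)) = P a" .
  qed
  have WtQ: "\<forall>b. (\<Sum>a\<in>UNIV. Wt t (a,b)) = Qt t b"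
  proof
    fix b
    have "(\<Sum>a\<in>UNIV. Wt t (a,b)) = (1 - t) * (\<Sum>a\<in>UNIV. W (a,b)) + t * (\<Sum>a\<in>UNIV. if a = b then P a else 0)"
      unfolding Wt_def by (simp only: fst_conv snd_conv sum.distrib sum_distrib_left)
    also have "\<dots> = Qt t b" using WQ by (simp add: Qt_def)
    finally show "(\<Sum>a\<in>UNIV. Wt t (a,b)) = Qt t b" .
  qed
  have Wtdist: "(\<Sum>z\<in>UNIV. Wt t z * \<rho> (fst z) (snd z)) < D"
  proof -
    have "(\<Sum>z\<in>UNIV. Wt t z * \<rho> (fst z) (snd z)) = (1 - t) * (\<Sum>z\<in>UNIV. W z * \<rho> (fst z) (snd z))"
    proof -
      have "Wt t z * \<rho> (fst z) (snd z) = (1 - t) * (W z * \<rho> (fst z) (snd z))" for z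
        using rho_eq by (cases "fst z = snd z") (auto simp: Wt_def algebra_simps)
      hence "(\<Sum>z\<in>UNIV. Wt t z * \<rho> (fst z) (snd z)) = (\<Sum>z\<in>UNIV. (1 - t) * (W z * \<rho> (fst z) (snd z)))"
        by (intro sum.cong) blast+
      thus ?thesis by (simp only: sum_distrib_left)
    qed
    also have "\<dots> \<le> (1 - t) * D" using t WD by (intro mult_left_mono) auto
    also have "\<dots> < D" using t Dpos by simp
    finally show ?thesis .
  qed
  have pt: "Wt t z * hWg P (Qt t) (Wt t) z \<le> g t z" for z
  proof -
    obtain a b where z: "z = (a,b)" by fastforce
    show ?thesis
    proof (cases "W z > 0")
      case True
      have "Wt t z > 0" using True t P0[rule_format, of "snd z"] by (auto simp: Wt_def intro!: add_pos_nonneg)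
      then show ?thesis using True by (simp add: g_def hWg_def)
    next
      case False
      hence Wz: "W z = 0" using W0[rule_format, of z] by linarith
      show ?thesis
      proof (cases "a = b")
        case False
        then show ?thesis using Wz z t by (simp add: Wt_def g_def hWg_def)
      next
        case True
        have Pa: "P a > 0" using P0 by simp
        have Wtz: "Wt t z = t * P a" using Wz z True by (simp add: Wt_def)
        have Qta: "Qt t a \<ge> t * P a" using t Q0[of a] by (simp add: Qt_def)
        have tPa: "t * P a > 0" using t Pa by simp
        have "Wt t z / (P a * Qt t a) \<le> 1 / P a"
          unfolding Wtz using Pa tPa Qta by (simp add: divide_simps)
        hence "ln (Wt t z / (P a * Qt t a)) \<le> ln (1 / P a)"
          using Wtz Pa tPa Qta t by (intro ln_mono) (auto intro!: divide_pos_pos mult_pos_pos less_le_trans[OF tPa Qta])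
        hence "t * P a * ln (Wt t z / (P a * Qt t a)) \<le> t * P a * ln (1 / P a)"
          using tPa by (intro mult_left_mono) auto
        also have "\<dots> = t * (- (P a * ln (P a)))" using Pa by (simp add: ln_div)
        also have "\<dots> \<le> t * \<bar>P a * ln (P a)\<bar>" using t by (intro mult_left_mono) auto
        finally show ?thesis using Wtz Wz z True tPa by (simp add: g_def hWg_def)
      qed
    qed
  qed
  have "mug P (Qt t) (Wt t) + muMg M (Qt t) \<le> G t"
    unfolding mug_def muMg_def G_def by (intro add_right_mono sum_mono pt)
  hence "mug P (Qt t) (Wt t) + muMg M (Qt t) < a" using t by simp
  then show ?thesis using Wt0 WtP WtQ Wtdist by blast
qed

lemma ereal_add_lt: "x + ereal c < ereal a \<Longrightarrow> x < ereal (a - c)"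
  by (cases x) auto

lemma extract_QW:
  fixes P :: "'a::finite \<Rightarrow> real"
  assumes "R_fun P \<rho> M D < ereal a"
  shows "\<exists>Q W. is_pmf Q \<and> W \<in> couplings P Q \<rho> D \<and> mug P Q W + muMg M Q < a"
proof -
  obtain Q where Q: "is_pmf Q" "I_PQD P Q \<rho> D + ereal (muMg M Q) < ereal a"
    using assms unfolding R_fun_def INF_less_iff muMg_def by auto
  have "I_PQD P Q \<rho> D < ereal (a - muMg M Q)" using Q(2) by (rule ereal_add_lt)
  then obtain W where W: "W \<in> couplings P Q \<rho> D"
      "rel_entropy W (\<lambda>ab. P (fst ab) * Q (snd ab)) < ereal (a - muMg M Q)"
    unfolding I_PQD_def INF_less_iff by auto
  have "\<not> (\<exists>x. W x > 0 \<and> P (fst x) * Q (snd x) = 0)"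
  proof
    assume "\<exists>x. W x > 0 \<and> P (fst x) * Q (snd x) = 0"
    hence "rel_entropy W (\<lambda>ab. P (fst ab) * Q (snd ab)) = \<infinity>" unfolding rel_entropy_def by presburger
    with W(2) show False by simp
  qed
  hence "rel_entropy W (\<lambda>ab. P (fst ab) * Q (snd ab))
      = ereal (\<Sum>x\<in>{x. W x > 0}. W x * ln (W x / (P (fst x) * Q (snd x))))"
    by (simp add: rel_entropy_def)
  also have "(\<Sum>x\<in>{x. W x > 0}. W x * ln (W x / (P (fst x) * Q (snd x)))) = mug P Q W"
  proof -
    have "{x. W x > 0} = {x \<in> UNIV. W x > 0}" by simp
    hence "(\<Sum>x\<in>{x. W x > 0}. W x * ln (W x / (P (fst x) * Q (snd x))))
        = (\<Sum>x\<in>UNIV. if W x > 0 then W x * ln (W x / (P (fst x) * Q (snd x))) else 0)"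
      by (simp only: sum.inter_filter[OF finite, symmetric])
    also have "\<dots> = mug P Q W" unfolding mug_def hWg_def by (intro sum.cong) auto
    finally show ?thesis .
  qed
  finally have "mug P Q W < a - muMg M Q" using W(2) by simp
  then show ?thesis using Q(1) W(1) by (intro exI[of _ Q] exI[of _ W]) auto
qed

lemma R_fin:
  fixes P :: "'a::finite \<Rightarrow> real"
  assumes P: "is_pmf P" and P0: "\<forall>a. P a > 0" and rho_eq: "\<forall>x y. \<rho> x y = 0 \<longleftrightarrow> x = y"
    and D0: "D \<ge> 0"
  shows "R_fun P \<rho> M D < \<infinity>"
proof -
  define Wd where "Wd z = (if fst z = snd z then P (fst z) else 0)" for z :: "'a \<times> 'a"
  have P1: "(\<Sum>a\<in>UNIV. P a) = 1" using P by (simp add: is_pmf_def)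
  have Wd_c: "Wd \<in> couplings P P \<rho> D"
  proof -
    have m1: "\<forall>a. (\<Sum>b\<in>UNIV. Wd (a,b)) = P a" by (simp add: Wd_def)
    have m2: "\<forall>b. (\<Sum>a\<in>UNIV. Wd (a,b)) = P b" by (simp add: Wd_def)
    have "(\<Sum>z\<in>UNIV. Wd z) = 1" using m1 P1 by (simp add: sum_UNIV_pair)
    moreover have "\<forall>z. Wd z \<ge> 0" using P0 by (simp add: Wd_def less_imp_le)
    moreover have "(\<Sum>ab\<in>UNIV. Wd ab * \<rho> (fst ab) (snd ab)) = 0"
      using rho_eq by (intro sum.neutral) (auto simp: Wd_def)
    ultimately show ?thesis using m1 m2 D0 by (simp add: couplings_def is_pmf_def)
  qed
  have Pn0: "P a \<noteq> 0" for a using P0 by (metis less_irrefl)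
  have "rel_entropy Wd (\<lambda>ab. P (fst ab) * P (snd ab)) < \<infinity>"
    using Pn0 by (simp add: rel_entropy_def)
  hence "I_PQD P P \<rho> D < \<infinity>" unfolding I_PQD_def
    using Wd_c by (meson INF_lower le_less_trans)
  hence "I_PQD P P \<rho> D + ereal (\<Sum>b\<in>UNIV. P b * ln (M b)) < \<infinity>" by simp
  moreover have "R_fun P \<rho> M D \<le> I_PQD P P \<rho> D + ereal (\<Sum>b\<in>UNIV. P b * ln (M b))"
    unfolding R_fun_def using P by (intro INF_lower) simp
  ultimately show ?thesis by (meson le_less_trans)
qed

lemma diag_seq:
  fixes Pr :: "nat \<Rightarrow> nat \<Rightarrow> 'c \<Rightarrow> bool" and C :: "nat \<Rightarrow> nat \<Rightarrow> 'c"
  assumes ev: "\<forall>k. \<exists>N. \<forall>n\<ge>N. Pr k n (C k n)"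
    and anti: "\<And>k k' n c. k \<le> k' \<Longrightarrow> Pr k' n c \<Longrightarrow> Pr k n c"
  shows "\<exists>\<kappa>. \<forall>k. \<exists>N. \<forall>n\<ge>N. Pr k n (C (\<kappa> n) n)"
proof -
  obtain N where N: "\<And>k n. n \<ge> N k \<Longrightarrow> Pr k n (C k n)" using ev by metis
  define S where "S n = {j. j \<le> n \<and> N j + j \<le> n}" for n
  define \<kappa> where "\<kappa> n = (if S n = {} then 0 else Max (S n))" for n
  have "\<forall>n\<ge>N k + k. Pr k n (C (\<kappa> n) n)" for k
  proof (intro allI impI)
    fix n assume n: "n \<ge> N k + k"
    have kS: "k \<in> S n" using n by (simp add: S_def)
    have fin: "finite (S n)" by (simp add: S_def)
    have ne: "S n \<noteq> {}" using kS by auto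
    have "\<kappa> n \<in> S n" using ne fin by (simp add: \<kappa>_def)
    hence "Pr (\<kappa> n) n (C (\<kappa> n) n)" by (intro N) (simp add: S_def)
    moreover have "k \<le> \<kappa> n" using kS fin ne by (simp add: \<kappa>_def)
    ultimately show "Pr k n (C (\<kappa> n) n)" using anti by blast
  qed
  then show ?thesis by blast
qed

lemma blowup_sub: "blowup \<rho> n D C \<subseteq> strings n" by (auto simp: blowup_def)

lemma blowup_sum:
  fixes P :: "'a::finite \<Rightarrow> real"
  assumes P1: "(\<Sum>a\<in>UNIV. P a) = 1"
  shows "(\<Sum>x\<in>blowup \<rho> n D C. \<Prod>i<n. P (x!i)) = 1 - uncg P \<rho> D n C"
proof -
  have "uncg P \<rho> D n C = (\<Sum>x\<in>{x \<in> strings n. x \<notin> blowup \<rho> n D C}. \<Prod>i<n. P (x!i))"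
    unfolding uncg_def by (simp add: sum.inter_filter[OF finite_strings])
  also have "{x \<in> strings n. x \<notin> blowup \<rho> n D C} = strings n - blowup \<rho> n D C" by auto
  finally have u: "uncg P \<rho> D n C = (\<Sum>x\<in>strings n - blowup \<rho> n D C. \<Prod>i<n. P (x!i))" .
  have "(\<Sum>x\<in>strings n. \<Prod>i<n. P (x!i)) = (\<Sum>x\<in>strings n - blowup \<rho> n D C. \<Prod>i<n. P (x!i))
      + (\<Sum>x\<in>blowup \<rho> n D C. \<Prod>i<n. P (x!i))"
    by (rule sum.subset_diff[OF blowup_sub finite_strings])
  then show ?thesis using sum_pn_1[OF P1, of n] u by simp
qed

lemma uncg_nonneg: "\<forall>a. P a \<ge> 0 \<Longrightarrow> uncg P \<rho> D n C \<ge> 0"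
  unfolding uncg_def by (intro sum_nonneg) (auto simp: prod_nonneg)

lemma exp_dist_bound:
  fixes P :: "'a::finite \<Rightarrow> real"
  assumes n: "n \<ge> 1" and C: "C \<subseteq> strings n" "C \<noteq> {}" and D0: "D \<ge> 0"
    and P0: "\<forall>a. P a \<ge> 0" and P1: "(\<Sum>a\<in>UNIV. P a) = 1"
  shows "exp_dist P \<rho> n C \<le> ereal (D + Max (range (\<lambda>(a,b). \<rho> a b)) * uncg P \<rho> D n C)"
proof -
  define rmax where "rmax = Max (range (\<lambda>(a,b). \<rho> a b))"
  have rle: "\<rho> a b \<le> rmax" for a b
    unfolding rmax_def by (rule Max_ge) (auto simp: image_iff)
  define Pn where "Pn x = (\<Prod>i<n. P (x!i))" for x :: "'a list"
  have Pn0: "Pn x \<ge> 0" for x unfolding Pn_def using P0 by (simp add: prod_nonneg)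
  define bd where "bd x = (if x \<in> blowup \<rho> n D C then D else rmax)" for x
  obtain y0 where y0: "y0 \<in> C" using C(2) by blast
  have rs: "rho_n_set \<rho> n x C \<le> ereal (bd x)" if x: "x \<in> strings n" for x
  proof (cases "x \<in> blowup \<rho> n D C")
    case True
    then obtain y where y: "y \<in> C" "rho_n \<rho> n x y \<le> D" by (auto simp: blowup_def)
    have "rho_n_set \<rho> n x C \<le> ereal (rho_n \<rho> n x y)" unfolding rho_n_set_def using y(1) by (rule INF_lower)
    also have "\<dots> \<le> ereal (bd x)" using y(2) True by (simp add: bd_def)
    finally show ?thesis .
  next
    case False
    have "rho_n_set \<rho> n x C \<le> ereal (rho_n \<rho> n x y0)" unfolding rho_n_set_def using y0 by (rule INF_lower)
    also have "rho_n \<rho> n x y0 \<le> rmax"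
    proof -
      have "(\<Sum>i<n. \<rho> (x!i) (y0!i)) \<le> (\<Sum>i<n. rmax)" by (intro sum_mono rle)
      hence "(\<Sum>i<n. \<rho> (x!i) (y0!i)) \<le> real n * rmax" by simp
      thus ?thesis using n unfolding rho_n_def by (simp add: field_simps)
    qed
    finally show ?thesis using False by (simp add: bd_def)
  qed
  have "exp_dist P \<rho> n C \<le> (\<Sum>x\<in>strings n. ereal (Pn x) * ereal (bd x))"
    unfolding exp_dist_def Pn_def[symmetric]
    by (intro sum_mono ereal_mult_left_mono rs) (auto simp: Pn0)
  also have "\<dots> = ereal (\<Sum>x\<in>strings n. Pn x * bd x)" by (simp add: sum_ereal)
  also have "(\<Sum>x\<in>strings n. Pn x * bd x)
      \<le> (\<Sum>x\<in>strings n. D * Pn x + rmax * (if x \<notin> blowup \<rho> n D C then Pn x else 0))"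
  proof (intro sum_mono)
    fix x
    have "rmax \<ge> 0 \<or> True" by simp
    show "Pn x * bd x \<le> D * Pn x + rmax * (if x \<notin> blowup \<rho> n D C then Pn x else 0)"
      using Pn0[of x] D0 by (auto simp: bd_def algebra_simps)
  qed
  also have "\<dots> = D + rmax * uncg P \<rho> D n C"
    using sum_pn_1[OF P1, of n] unfolding Pn_def uncg_def
    by (simp add: sum.distrib flip: sum_distrib_left)
  finally show ?thesis unfolding rmax_def by simp
qed

lemma seq_above:
  fixes R :: ereal
  assumes "R < \<infinity>"
  shows "\<exists>a::nat\<Rightarrow>real. (\<forall>k. R < ereal (a k)) \<and> (\<forall>k k'. k \<le> k' \<longrightarrow> a k' \<le> a k)
     \<and> (\<forall>y. R < y \<longrightarrow> (\<exists>k. ereal (a k) < y))"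
proof (cases R)
  case (real r)
  define a where "a k = r + inverse (real (Suc k))" for k
  have "\<forall>k. R < ereal (a k)" by (simp add: a_def real)
  moreover have "\<forall>k k'. k \<le> k' \<longrightarrow> a k' \<le> a k"
    by (auto simp: a_def intro!: le_imp_inverse_le)
  moreover have "\<exists>k. ereal (a k) < y" if "R < y" for y
  proof (cases y)
    case (real s)
    then have "s - r > 0" using that \<open>R = ereal r\<close> by simp
    then obtain k where "inverse (real (Suc k)) < s - r" using reals_Archimedean by blast
    then show ?thesis using real by (intro exI[of _ k]) (simp add: a_def)
  qed (use that \<open>R = ereal r\<close> in auto)
  ultimately show ?thesis by blast
next
  case PInf
  then show ?thesis using assms by simp
next
  case MInf
  note RM = this
  define a where "a k = - real k" for k
  have "\<exists>k. ereal (a k) < y" if yR: "R < y" for y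
  proof (cases y)
    case (real s)
    obtain k :: nat where "real k > - s" using reals_Archimedean2 by blast
    then show ?thesis using real by (intro exI[of _ k]) (simp add: a_def)
  next
    case PInf
    then show ?thesis by (intro exI[of _ 0]) simp
  next
    case MInf
    then show ?thesis using yR RM by simp
  qed
  then show ?thesis using RM by (intro exI[of _ a]) (auto simp: a_def)
qed

theorem mainTheorem3:
  fixes P :: "'a::finite \<Rightarrow> real" and \<rho> :: "'a \<Rightarrow> 'a \<Rightarrow> real"
    and M :: "'a \<Rightarrow> real" and D :: real
  assumes "is_pmf P" and "\<forall>a. P a > 0"
    and "\<forall>x y. \<rho> x y \<ge> 0"
    and "\<forall>a. M a > 0"
    and "\<forall>x y. \<rho> x y = 0 \<longleftrightarrow> x = y"
    and "D \<ge> 0"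
  shows "\<exists>C :: nat \<Rightarrow> 'a list set.
     (\<forall>n. C n \<subseteq> strings n) \<and>
     limsup (\<lambda>n. norm_log_meas M n (C n)) \<le> R_fun P \<rho> M D \<and>
     (\<lambda>n. \<Sum>xs\<in>blowup \<rho> n D (C n). \<Prod>i<n. P (xs ! i)) \<longlonglongrightarrow> 1 \<and>
     limsup (\<lambda>n. exp_dist P \<rho> n (C n)) \<le> ereal D"
proof -
  note Ppmf = assms(1) and P0 = assms(2) and rho0 = assms(3) and M0 = assms(4)
    and rho_eq = assms(5) and D0 = assms(6)
  have P0': "\<forall>a. P a \<ge> 0" using Ppmf by (simp add: is_pmf_def)
  have P1: "(\<Sum>a\<in>UNIV. P a) = 1" using Ppmf by (simp add: is_pmf_def)
  define R where "R = R_fun P \<rho> M D"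
  have Rfin: "R < \<infinity>" unfolding R_def using R_fin[OF Ppmf P0 rho_eq D0] .
  have good: "\<exists>C. (\<forall>n. C n \<subseteq> strings n \<and> C n \<noteq> {})
     \<and> (\<forall>\<^sub>F n in sequentially. norm_log_meas M n (C n) \<le> ereal a)
     \<and> (\<lambda>n. uncg P \<rho> D n (C n)) \<longlonglongrightarrow> 0" if Ra: "R < ereal a" for a
  proof -
    obtain Q W where QW: "is_pmf Q" "W \<in> couplings P Q \<rho> D" "mug P Q W + muMg M Q < a"
      using extract_QW[of P \<rho> M D a] Ra unfolding R_def by blast
    have W0: "\<forall>z. W z \<ge> 0" and WP: "\<forall>a. (\<Sum>b\<in>UNIV. W (a,b)) = P a"
      and WQ: "\<forall>b. (\<Sum>a\<in>UNIV. W (a,b)) = Q b"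
      and WD: "(\<Sum>z\<in>UNIV. W z * \<rho> (fst z) (snd z)) \<le> D"
      using QW(2) by (auto simp: couplings_def is_pmf_def)
    obtain Q' W' where QW': "\<forall>z. W' z \<ge> 0" "\<forall>a. (\<Sum>b\<in>UNIV. W' (a,b)) = P a"
       "\<forall>b. (\<Sum>a\<in>UNIV. W' (a,b)) = Q' b"
       "(\<Sum>z\<in>UNIV. W' z * \<rho> (fst z) (snd z)) < D \<or> (\<forall>z. W' z > 0 \<longrightarrow> \<rho> (fst z) (snd z) = 0)"
       "mug P Q' W' + muMg M Q' < a"
      using mixing[OF P0 P1 W0 WP WQ rho0 rho_eq D0 WD QW(3)] by blast
    show ?thesis using achieve_global[OF P0 P1 QW'(1,2,3) M0 rho0 QW'(4) D0 QW'(5)] .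
  qed
  obtain a :: "nat \<Rightarrow> real" where a: "\<forall>k. R < ereal (a k)" "\<forall>k k'. k \<le> k' \<longrightarrow> a k' \<le> a k"
      "\<forall>y. R < y \<longrightarrow> (\<exists>k. ereal (a k) < y)"
    using seq_above[OF Rfin] by blast
  have "\<forall>k. \<exists>C. (\<forall>n. C n \<subseteq> strings n \<and> C n \<noteq> {})
     \<and> (\<forall>\<^sub>F n in sequentially. norm_log_meas M n (C n) \<le> ereal (a k))
     \<and> (\<lambda>n. uncg P \<rho> D n (C n)) \<longlonglongrightarrow> 0"
    using good a(1) by blast
  then obtain Cs where Cs: "\<And>k n. Cs k n \<subseteq> strings n" "\<And>k n. Cs k n \<noteq> {}"
    "\<And>k. \<forall>\<^sub>F n in sequentially. norm_log_meas M n (Cs k n) \<le> ereal (a k)"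
    "\<And>k. (\<lambda>n. uncg P \<rho> D n (Cs k n)) \<longlonglongrightarrow> 0"
    by metis
  define Pr where "Pr k n c \<longleftrightarrow> norm_log_meas M n c \<le> ereal (a k) \<and> uncg P \<rho> D n c \<le> inverse (real (Suc k))"
    for k n c
  have ev: "\<forall>k. \<exists>N. \<forall>n\<ge>N. Pr k n (Cs k n)"
  proof
    fix k
    have "\<forall>\<^sub>F n in sequentially. uncg P \<rho> D n (Cs k n) < inverse (real (Suc k))"
      using Cs(4)[of k] by (rule order_tendstoD(2)) simp
    hence "\<forall>\<^sub>F n in sequentially. Pr k n (Cs k n)"
      using Cs(3)[of k] unfolding Pr_def by eventually_elim auto
    then show "\<exists>N. \<forall>n\<ge>N. Pr k n (Cs k n)" by (simp add: eventually_sequentially)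
  qed
  have anti: "Pr k n c" if "k \<le> k'" "Pr k' n c" for k k' n c
  proof -
    have "ereal (a k') \<le> ereal (a k)" using a(2) that(1) by simp
    moreover have "inverse (real (Suc k')) \<le> inverse (real (Suc k))"
      using that(1) by (intro le_imp_inverse_le) auto
    ultimately show ?thesis using that(2) unfolding Pr_def by (meson order_trans)
  qed
  obtain \<kappa> where \<kappa>: "\<forall>k. \<exists>N. \<forall>n\<ge>N. Pr k n (Cs (\<kappa> n) n)"
  proof -
    have "\<exists>\<kappa>. \<forall>k. \<exists>N. \<forall>n\<ge>N. Pr k n (Cs (\<kappa> n) n)"
      by (rule diag_seq[where Pr = Pr and C = Cs, OF ev]) (rule anti)
    then show ?thesis using that by blast
  qed
  define C where "C n = Cs (\<kappa> n) n" for n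
  have evk: "\<forall>\<^sub>F n in sequentially. Pr k n (C n)" for k
    using \<kappa> unfolding C_def eventually_sequentially by blast
  have Csub: "C n \<subseteq> strings n" "C n \<noteq> {}" for n using Cs(1,2) by (auto simp: C_def)
  have unc_lim: "(\<lambda>n. uncg P \<rho> D n (C n)) \<longlonglongrightarrow> 0"
  proof (rule order_tendstoI)
    fix e :: real assume "e < 0"
    then show "\<forall>\<^sub>F n in sequentially. e < uncg P \<rho> D n (C n)"
      using uncg_nonneg[OF P0'] by (intro always_eventually allI) (meson le_less_trans not_le)
  next
    fix e :: real assume "e > 0"
    then obtain k where k: "inverse (real (Suc k)) < e" using reals_Archimedean by blast
    show "\<forall>\<^sub>F n in sequentially. uncg P \<rho> D n (C n) < e"
      using evk[of k] by eventually_elim (use k in \<open>auto simp: Pr_def\<close>)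
  qed
  have part1: "limsup (\<lambda>n. norm_log_meas M n (C n)) \<le> R"
    unfolding Limsup_le_iff
  proof (intro allI impI)
    fix y assume "R < y"
    then obtain k where k: "ereal (a k) < y" using a(3) by blast
    show "\<forall>\<^sub>F n in sequentially. norm_log_meas M n (C n) < y"
      using evk[of k] by eventually_elim (use k in \<open>auto simp: Pr_def\<close>)
  qed
  have part2: "(\<lambda>n. \<Sum>xs\<in>blowup \<rho> n D (C n). \<Prod>i<n. P (xs ! i)) \<longlonglongrightarrow> 1"
  proof -
    have "(\<lambda>n. 1 - uncg P \<rho> D n (C n)) \<longlonglongrightarrow> 1 - 0" by (intro tendsto_intros unc_lim)
    then show ?thesis by (simp add: blowup_sum[OF P1])
  qed
  define rmax where "rmax = Max (range (\<lambda>(a,b). \<rho> a b))"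
  have part3: "limsup (\<lambda>n. exp_dist P \<rho> n (C n)) \<le> ereal D"
  proof -
    have ev4: "\<forall>\<^sub>F n in sequentially. exp_dist P \<rho> n (C n) \<le> ereal (D + rmax * uncg P \<rho> D n (C n))"
      using eventually_ge_at_top[of 1]
      by (rule eventually_mono) (use exp_dist_bound[OF _ Csub D0 P0' P1] in \<open>simp add: rmax_def\<close>)
    have "(\<lambda>n. D + rmax * uncg P \<rho> D n (C n)) \<longlonglongrightarrow> D + rmax * 0" by (intro tendsto_intros unc_lim)
    hence lim: "(\<lambda>n. ereal (D + rmax * uncg P \<rho> D n (C n))) \<longlonglongrightarrow> ereal D" by (intro tendsto_ereal) simp
    have "limsup (\<lambda>n. exp_dist P \<rho> n (C n)) \<le> limsup (\<lambda>n. ereal (D + rmax * uncg P \<rho> D n (C n)))"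
      using ev4 by (rule Limsup_mono)
    also have "\<dots> = ereal D" using lim_imp_Limsup[OF trivial_limit_sequentially lim] .
    finally show ?thesis .
  qed
  show ?thesis
    using Csub part1 part2 part3 unfolding R_def by blast
qed

end
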